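(* Let $[\gamma]\in J$, $M=M_\gamma$, and $i=l(M)$, and let $L_M=K(\sqrt[p]{\delta}:[\delta]\in M)$. (1) If $i<p$ then $[\gamma]\in J_{p-1}$ and $\mathrm{Gal}(L_M/F)\cong B_{i,e([\gamma])}$ (as extensions of $G$ by $\mathrm{Gal}(L_M/K)\cong A/A_i$). (2) If $i=p$ then $\mathrm{Gal}(L_M/F)\cong B_{p,0}$.
   Context: $p$ odd prime; $F$ a field containing a primitive $p$th root of unity $\xi_p$; $K=F(\sqrt[p]{a})$, $a\in F^\times$, cyclic of degree $p$ over $F$; $G=\mathrm{Gal}(K/F)$ with generator $\sigma$ satisfying $\sigma(\sqrt[p]{a})=\xi_p\sqrt[p]{a}$; $\rho=\sigma-1$. $J=K^\times/K^{\times p}$ is an $\mathbb{F}_p[G]$-module written multiplicatively with exponential action; $[\gamma]$ is the class of $\gamma\in K^\times$. $J_i=\ker(\rho^i)$ on $J$. $M_\gamma$ is the $\mathbb{F}_p[G]$-submodule generated by $[\gamma]$, and $l(M)$ (the length) is the $\mathbb{F}_p$-dimension of a cyclic module $M$; if $M$ is generated by $m$, $l(M)$ is the least $i$ with $m^{\rho^i}$ trivial. Index: for $[\gamma]\in J_{p-1}$, $N_{K/F}(\gamma)$ is a $p$th power in $K$, and $e([\gamma])\in\mathbb{F}_p$ is defined by $\xi_p^{e([\gamma])}=\sigma(\delta)/\delta$ for any $\delta\in K$ with $\delta^p=N_{K/F}(\gamma)$; $e$ is a well-defined homomorphism $J_{p-1}\to\mathbb{F}_p$. $A$, $A_i$: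 $A$ is the free $\mathbb{F}_p[G]$-module on $\tau$ with $\sigma$ acting as multiplication by $\tau$, $A_i$ the span of $(\tau-1)^k$, $k\ge i$ ($A_p=0$). $B_{i,e}$ is the extension $1\to A/A_i\to B_{i,e}\to G\to 1$ in which a lift $\tilde\sigma$ of $\sigma$ acts on $A/A_i$ by multiplication by $\tau$ and $\tilde\sigma^p=e\,\overline{(\tau-1)}^{\,i-1}$. *)

theory Defs
  imports Main "HOL-Computational_Algebra.Primes" "HOL-Algebra.Group"
begin

definition is_subfield :: "'a::field set \<Rightarrow> bool" where
  "is_subfield S \<longleftrightarrow> 0 \<in> S \<and> 1 \<in> S \<and>
     (\<forall>x\<in>S. \<forall>y\<in>S. x + y \<in> S \<and> x - y \<in> S \<and> x * y \<in> S) \<and>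
     (\<forall>x\<in>S. x \<noteq> 0 \<longrightarrow> inverse x \<in> S)"

definition field_gen :: "'a::field set \<Rightarrow> 'a set" where
  "field_gen S = \<Inter>{T. is_subfield T \<and> S \<subseteq> T}"

definition is_aut_over :: "'a::field set \<Rightarrow> 'a set \<Rightarrow> ('a \<Rightarrow> 'a) \<Rightarrow> bool" where
  "is_aut_over L F f \<longleftrightarrow> bij_betw f L L \<and>
     (\<forall>x\<in>L. \<forall>y\<in>L. f (x + y) = f x + f y \<and> f (x * y) = f x * f y) \<and>
     (\<forall>x\<in>F. f x = x)"

definition Gal :: "'a::field set \<Rightarrow> 'a set \<Rightarrow> ('a \<Rightarrow> 'a) set" where
  "Gal L F = {f. is_aut_over L F f \<and> (\<forall>x. x \<notin> L \<longrightarrow> f x = x)}"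

definition Gal_group :: "'a::field set \<Rightarrow> 'a set \<Rightarrow> ('a \<Rightarrow> 'a) monoid" where
  "Gal_group L F = \<lparr>carrier = Gal L F, mult = (\<lambda>f g. f \<circ> g), one = id\<rparr>"

text \<open>gamma is a p-th power in K (i.e. its class in J = K^*/K^*p is trivial).\<close>
definition pth_power_in :: "nat \<Rightarrow> 'a::field set \<Rightarrow> 'a \<Rightarrow> bool" where
  "pth_power_in p K x \<longleftrightarrow> (\<exists>b\<in>K. b \<noteq> 0 \<and> x = b ^ p)"

text \<open>rho = sigma - 1, written multiplicatively: gamma^rho = sigma(gamma)/gamma.\<close>
definition rho_iter :: "('a::field \<Rightarrow> 'a) \<Rightarrow> nat \<Rightarrow> 'a \<Rightarrow> 'a" where
  "rho_iter \<sigma> n = ((\<lambda>x. \<sigma> x / x) ^^ n)"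

definition mod_length :: "nat \<Rightarrow> 'a::field set \<Rightarrow> ('a \<Rightarrow> 'a) \<Rightarrow> 'a \<Rightarrow> nat" where
  "mod_length p K \<sigma> \<gamma> = (LEAST i. pth_power_in p K (rho_iter \<sigma> i \<gamma>))"

definition in_J :: "nat \<Rightarrow> 'a::field set \<Rightarrow> ('a \<Rightarrow> 'a) \<Rightarrow> nat \<Rightarrow> 'a \<Rightarrow> bool" where
  "in_J p K \<sigma> i \<gamma> \<longleftrightarrow> pth_power_in p K (rho_iter \<sigma> i \<gamma>)"

text \<open>Representatives of the classes in M_gamma, the F_p[G]-submodule of J generated by [gamma].\<close>
definition Mset :: "nat \<Rightarrow> 'a::field set \<Rightarrow> ('a \<Rightarrow> 'a) \<Rightarrow> 'a \<Rightarrow> 'a set" where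
  "Mset p K \<sigma> \<gamma> = {\<delta>. \<exists>n::nat \<Rightarrow> nat. \<exists>b\<in>K. b \<noteq> 0 \<and>
       \<delta> = (\<Prod>k<p. ((\<sigma> ^^ k) \<gamma>) ^ n k) * b ^ p}"

definition L_M :: "nat \<Rightarrow> 'a::field set \<Rightarrow> ('a \<Rightarrow> 'a) \<Rightarrow> 'a \<Rightarrow> 'a set" where
  "L_M p K \<sigma> \<gamma> = field_gen (K \<union> {y. y ^ p \<in> Mset p K \<sigma> \<gamma>})"

definition norm_KF :: "nat \<Rightarrow> ('a::field \<Rightarrow> 'a) \<Rightarrow> 'a \<Rightarrow> 'a" where
  "norm_KF p \<sigma> \<gamma> = (\<Prod>k<p. (\<sigma> ^^ k) \<gamma>)"

text \<open>Index e([gamma]) in F_p, represented by a natural number < p: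
  xi^e = sigma(delta)/delta for delta in K with delta^p = N(gamma).\<close>
definition kummer_index :: "nat \<Rightarrow> 'a::field \<Rightarrow> 'a set \<Rightarrow> ('a \<Rightarrow> 'a) \<Rightarrow> 'a \<Rightarrow> nat" where
  "kummer_index p \<xi> K \<sigma> \<gamma> =
     (THE e. e < p \<and> (\<exists>\<delta>\<in>K. \<delta> \<noteq> 0 \<and> \<delta> ^ p = norm_KF p \<sigma> \<gamma> \<and> \<sigma> \<delta> = \<xi> ^ e * \<delta>))"

text \<open>A/A_i = F_p[t]/(t^i), t = tau - 1, elements as coefficient vectors w.r.t. 1, t, ..., t^(i-1),
  coefficients in {0..<p} (= F_p).\<close>
definition Avec :: "nat \<Rightarrow> nat \<Rightarrow> (nat \<Rightarrow> int) set" where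
  "Avec p i = {f. \<forall>j. 0 \<le> f j \<and> f j < int p \<and> (i \<le> j \<longrightarrow> f j = 0)}"

definition A_add :: "nat \<Rightarrow> (nat \<Rightarrow> int) \<Rightarrow> (nat \<Rightarrow> int) \<Rightarrow> nat \<Rightarrow> int" where
  "A_add p f g = (\<lambda>j. (f j + g j) mod int p)"

text \<open>Multiplication by tau = 1 + t on A/A_i.\<close>
definition tau_act :: "nat \<Rightarrow> nat \<Rightarrow> (nat \<Rightarrow> int) \<Rightarrow> nat \<Rightarrow> int" where
  "tau_act p i f = (\<lambda>j. if j < i then (f j + (if j = 0 then 0 else f (j - 1))) mod int p else 0)"

text \<open>The element e * (tau-1)^(i-1) of A/A_i.\<close>
definition A_top :: "nat \<Rightarrow> nat \<Rightarrow> nat \<Rightarrow> nat \<Rightarrow> int" where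
  "A_top p i e = (\<lambda>j. if 0 < i \<and> j = i - 1 then int e mod int p else 0)"

text \<open>B_{i,e}: pairs (m,k) standing for m * sigma~^k (k < p), with sigma~ acting on A/A_i by tau
  and sigma~^p = e (tau-1)^(i-1).  The projection to G = <sigma> is (m,k) |-> sigma^k.\<close>
definition B_grp :: "nat \<Rightarrow> nat \<Rightarrow> nat \<Rightarrow> ((nat \<Rightarrow> int) \<times> nat) monoid" where
  "B_grp p i e = \<lparr>carrier = Avec p i \<times> {..<p},
     mult = (\<lambda>(m1, k1) (m2, k2).
        (A_add p (A_add p m1 ((tau_act p i ^^ k1) m2))
                 (if p \<le> k1 + k2 then A_top p i e else (\<lambda>_. 0)),
         (k1 + k2) mod p)),
     one = ((\<lambda>_. 0), 0)\<rparr>"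

text \<open>Gal(L/F) is isomorphic to B as an extension of G: a group isomorphism compatible with the
  projections (restriction to K, resp. (m,k) |-> sigma^k).\<close>
definition iso_as_extension ::
  "'a::field set \<Rightarrow> 'a set \<Rightarrow> 'a set \<Rightarrow> ('a \<Rightarrow> 'a) \<Rightarrow> ((nat \<Rightarrow> int) \<times> nat) monoid \<Rightarrow> bool" where
  "iso_as_extension L K F \<sigma> B \<longleftrightarrow>
     (\<exists>\<phi>. \<phi> \<in> iso (Gal_group L F) B \<and>
          (\<forall>g\<in>Gal L F. \<forall>x\<in>K. g x = (\<sigma> ^^ snd (\<phi> g)) x))"

end

theory Submission
  imports Defs "HOL-Number_Theory.Number_Theory" "HOL-Computational_Algebra.Polynomial"
begin


context
  fixes S :: "'a::field set"
  assumes sf: "is_subfield S"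
begin
lemma sf_0: "0 \<in> S" using sf unfolding is_subfield_def by auto
lemma sf_1: "1 \<in> S" using sf unfolding is_subfield_def by auto
lemma sf_add: "x \<in> S \<Longrightarrow> y \<in> S \<Longrightarrow> x + y \<in> S" using sf unfolding is_subfield_def by auto
lemma sf_diff: "x \<in> S \<Longrightarrow> y \<in> S \<Longrightarrow> x - y \<in> S" using sf unfolding is_subfield_def by auto
lemma sf_mult: "x \<in> S \<Longrightarrow> y \<in> S \<Longrightarrow> x * y \<in> S" using sf unfolding is_subfield_def by auto
lemma sf_inverse: "x \<in> S \<Longrightarrow> inverse x \<in> S"
  using sf unfolding is_subfield_def by (cases "x = 0") auto
lemma sf_uminus: "x \<in> S \<Longrightarrow> - x \<in> S" using sf_diff[OF sf_0] by simp
lemma sf_divide: "x \<in> S \<Longrightarrow> y \<in> S \<Longrightarrow> x / y \<in> S"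
  by (simp add: divide_inverse sf_mult sf_inverse)
lemma sf_power: "x \<in> S \<Longrightarrow> x ^ n \<in> S"
  by (induction n) (auto intro: sf_1 sf_mult)
lemma sf_sum: "(\<And>i. i \<in> A \<Longrightarrow> f i \<in> S) \<Longrightarrow> sum f A \<in> S"
  by (induction A rule: infinite_finite_induct) (auto intro: sf_0 sf_add)
lemma sf_prod: "(\<And>i. i \<in> A \<Longrightarrow> f i \<in> S) \<Longrightarrow> prod f A \<in> S"
  by (induction A rule: infinite_finite_induct) (auto intro: sf_1 sf_mult)
lemma sf_numeral_1: "- 1 \<in> S" using sf_uminus[OF sf_1] .
end

lemma is_subfield_UNIV: "is_subfield (UNIV :: 'a::field set)"
  unfolding is_subfield_def by auto

lemma field_gen_subfield: "is_subfield (field_gen S)"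
  unfolding field_gen_def is_subfield_def by auto

lemma field_gen_sub: "S \<subseteq> field_gen S"
  unfolding field_gen_def by auto

lemma field_gen_least: "is_subfield T \<Longrightarrow> S \<subseteq> T \<Longrightarrow> field_gen S \<subseteq> T"
  unfolding field_gen_def by auto

lemma field_gen_mono: "S \<subseteq> T \<Longrightarrow> field_gen S \<subseteq> field_gen T"
  by (meson field_gen_least field_gen_sub field_gen_subfield order_trans)

definition fhom :: "'a::field set \<Rightarrow> ('a \<Rightarrow> 'a) \<Rightarrow> bool" where
  "fhom E f \<longleftrightarrow> (\<forall>x\<in>E. \<forall>y\<in>E. f (x + y) = f x + f y \<and> f (x * y) = f x * f y) \<and> f 1 = 1"

context
  fixes E :: "'a::field set" and f :: "'a \<Rightarrow> 'a"
  assumes sfE: "is_subfield E" and hf: "fhom E f"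
begin
lemma fh_add: "x \<in> E \<Longrightarrow> y \<in> E \<Longrightarrow> f (x + y) = f x + f y" using hf unfolding fhom_def by auto
lemma fh_mult: "x \<in> E \<Longrightarrow> y \<in> E \<Longrightarrow> f (x * y) = f x * f y" using hf unfolding fhom_def by auto
lemma fh_1: "f 1 = 1" using hf unfolding fhom_def by auto
lemma fh_0: "f 0 = 0"
proof -
  have "f (0 + 0) = f 0 + f 0" using fh_add sf_0[OF sfE] by blast
  then show ?thesis by (metis add_cancel_right_right add_0)
qed
lemma fh_uminus: "x \<in> E \<Longrightarrow> f (- x) = - f x"
proof -
  assume x: "x \<in> E"
  have "f (x + - x) = f x + f (- x)" using fh_add x sf_uminus[OF sfE x] by blast
  then show ?thesis by (simp add: fh_0 eq_neg_iff_add_eq_0 add.commute)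
qed
lemma fh_diff: "x \<in> E \<Longrightarrow> y \<in> E \<Longrightarrow> f (x - y) = f x - f y"
  using fh_add[of x "- y"] fh_uminus[of y] sf_uminus[OF sfE, of y] by simp
lemma fh_inverse: "x \<in> E \<Longrightarrow> f (inverse x) = inverse (f x)"
proof (cases "x = 0")
  case True then show ?thesis by (simp add: fh_0)
next
  case False
  assume x: "x \<in> E"
  have "f (x * inverse x) = f x * f (inverse x)" using fh_mult x sf_inverse[OF sfE x] by blast
  then have "f x * f (inverse x) = 1" using False by (simp add: fh_1)
  then show ?thesis by (metis inverse_unique)
qed
lemma fh_divide: "x \<in> E \<Longrightarrow> y \<in> E \<Longrightarrow> f (x / y) = f x / f y"
  by (simp add: divide_inverse fh_mult fh_inverse sf_inverse[OF sfE])
lemma fh_power: "x \<in> E \<Longrightarrow> f (x ^ n) = f x ^ n"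
  by (induction n) (auto simp: fh_1 fh_mult sf_power[OF sfE])
lemma fh_sum: "(\<And>i. i \<in> A \<Longrightarrow> g i \<in> E) \<Longrightarrow> f (sum g A) = (\<Sum>i\<in>A. f (g i))"
  by (induction A rule: infinite_finite_induct) (auto simp: fh_0 fh_add sf_sum[OF sfE])
lemma fh_prod: "(\<And>i. i \<in> A \<Longrightarrow> g i \<in> E) \<Longrightarrow> f (prod g A) = (\<Prod>i\<in>A. f (g i))"
  by (induction A rule: infinite_finite_induct) (auto simp: fh_1 fh_mult sf_prod[OF sfE])
lemma fh_eq_0_iff: "x \<in> E \<Longrightarrow> f x = 0 \<longleftrightarrow> x = 0"
proof
  assume x: "x \<in> E" and fx: "f x = 0"
  show "x = 0"
  proof (rule ccontr)
    assume "x \<noteq> 0"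
    then have "f (x * inverse x) = 1" by (simp add: fh_1)
    then show False using fh_mult[OF x sf_inverse[OF sfE x]] fx by simp
  qed
qed (simp add: fh_0)
lemma fh_inj: "inj_on f E"
proof (rule inj_onI)
  fix x y assume "x \<in> E" "y \<in> E" "f x = f y"
  then have "f (x - y) = 0" by (simp add: fh_diff)
  then show "x = y" using fh_eq_0_iff[OF sf_diff[OF sfE \<open>x\<in>E\<close> \<open>y\<in>E\<close>]] by simp
qed
lemma fh_image_subfield: "is_subfield (f ` E)"
  unfolding is_subfield_def
proof (intro conjI ballI impI)
  show "0 \<in> f ` E" using fh_0 sf_0[OF sfE] by force
  show "1 \<in> f ` E" using fh_1 sf_1[OF sfE] by force
  fix x y assume "x \<in> f ` E" "y \<in> f ` E"
  then obtain x' y' where x': "x' \<in> E" "x = f x'" and y': "y' \<in> E" "y = f y'" by auto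
  show "x + y \<in> f ` E" using x' y' fh_add sf_add[OF sfE] by (metis image_eqI)
  show "x - y \<in> f ` E" using x' y' fh_diff sf_diff[OF sfE] by (metis image_eqI)
  show "x * y \<in> f ` E" using x' y' fh_mult sf_mult[OF sfE] by (metis image_eqI)
next
  fix x assume "x \<in> f ` E"
  then obtain x' where x': "x' \<in> E" "x = f x'" by auto
  show "inverse x \<in> f ` E" using x' fh_inverse sf_inverse[OF sfE] by (metis image_eqI)
qed
end

lemma fhom_agree:
  assumes sfE: "is_subfield E" and hf: "fhom E f" and hg: "fhom E g"
    and SE: "S \<subseteq> E" and agree: "\<And>x. x \<in> S \<Longrightarrow> f x = g x"
  shows "\<And>x. x \<in> field_gen S \<Longrightarrow> f x = g x"
proof -
  define A where "A = {x \<in> E. f x = g x}"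
  have "is_subfield A"
    unfolding is_subfield_def
  proof (intro conjI ballI impI)
    show "0 \<in> A" unfolding A_def using sf_0[OF sfE] fh_0[OF sfE hf] fh_0[OF sfE hg] by simp
    show "1 \<in> A" unfolding A_def using sf_1[OF sfE] fh_1[OF sfE hf] fh_1[OF sfE hg] by simp
    fix x y assume x: "x \<in> A" and y: "y \<in> A"
    then have xE: "x \<in> E" "f x = g x" and yE: "y \<in> E" "f y = g y" unfolding A_def by auto
    show "x + y \<in> A" unfolding A_def
      using sf_add[OF sfE xE(1) yE(1)] fh_add[OF sfE hf xE(1) yE(1)] fh_add[OF sfE hg xE(1) yE(1)] xE yE by simp
    show "x - y \<in> A" unfolding A_def
      using sf_diff[OF sfE xE(1) yE(1)] fh_diff[OF sfE hf xE(1) yE(1)] fh_diff[OF sfE hg xE(1) yE(1)] xE yE by simp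
    show "x * y \<in> A" unfolding A_def
      using sf_mult[OF sfE xE(1) yE(1)] fh_mult[OF sfE hf xE(1) yE(1)] fh_mult[OF sfE hg xE(1) yE(1)] xE yE by simp
  next
    fix x assume x: "x \<in> A"
    then have xE: "x \<in> E" "f x = g x" unfolding A_def by auto
    show "inverse x \<in> A" unfolding A_def
      using sf_inverse[OF sfE xE(1)] fh_inverse[OF sfE hf xE(1)] fh_inverse[OF sfE hg xE(1)] xE by simp
  qed
  moreover have "S \<subseteq> A" using SE agree A_def by auto
  ultimately have "field_gen S \<subseteq> A" by (rule field_gen_least)
  then show "\<And>x. x \<in> field_gen S \<Longrightarrow> f x = g x" unfolding A_def by auto
qed

lemma fhom_comp:
  assumes "is_subfield E" "fhom E f" "fhom E g" "g ` E \<subseteq> E"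
  shows "fhom E (f \<circ> g)"
  using assms unfolding fhom_def by (auto simp: image_subset_iff)

lemma fhom_funpow:
  assumes "is_subfield E" "fhom E f" "f ` E \<subseteq> E"
  shows "fhom E (f ^^ n) \<and> (f ^^ n) ` E \<subseteq> E"
proof (induction n)
  case 0 then show ?case by (simp add: fhom_def)
next
  case (Suc n)
  then have "fhom E (f \<circ> (f^^n))" using assms fhom_comp[of E f "f^^n"] by auto
  then show ?case using Suc assms by (auto simp: image_subset_iff comp_def)
qed

context
  fixes p :: nat and \<xi> :: "'a::field"
  assumes pp: "prime p" and xp: "\<xi> ^ p = 1" and x1: "\<xi> \<noteq> 1"
begin

lemma xi_nz: "\<xi> \<noteq> 0"
proof
  assume "\<xi> = 0"
  moreover have "p > 0" using pp prime_gt_0_nat by blast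
  ultimately have "\<xi> ^ p = 0" by simp
  then show False using xp by simp
qed

lemma xi_pow_mod: "\<xi> ^ n = \<xi> ^ (n mod p)"
proof -
  have "\<xi> ^ n = \<xi> ^ (p * (n div p) + n mod p)" by (simp only: mult_div_mod_eq)
  also have "\<dots> = (\<xi> ^ p) ^ (n div p) * \<xi> ^ (n mod p)" by (simp only: power_add power_mult)
  also have "\<dots> = \<xi> ^ (n mod p)" by (simp add: xp)
  finally show ?thesis .
qed

lemma xi_pow_eq_1: "\<xi> ^ n = 1 \<longleftrightarrow> p dvd n"
proof
  assume h: "\<xi> ^ n = 1"
  show "p dvd n"
  proof (rule ccontr)
    assume nd: "\<not> p dvd n"
    then have "coprime n p" using pp prime_imp_coprime coprime_commute by blast
    then obtain u where u: "[n * u = Suc 0] (mod p)" using cong_solve_coprime_nat by blast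
    have p1: "p > 1" using pp prime_gt_1_nat by blast
    then have "(n * u) mod p = 1" using u unfolding cong_def by simp
    then have "\<xi> ^ (n * u) = \<xi>" using xi_pow_mod[of "n*u"] by simp
    moreover have "\<xi> ^ (n * u) = 1" by (simp add: power_mult h)
    ultimately show False using x1 by simp
  qed
next
  assume "p dvd n"
  then obtain q where "n = p * q" by blast
  then show "\<xi> ^ n = 1" by (simp add: power_mult xp)
qed

lemma xi_pow_inj: assumes "s < p" "t < p" "\<xi> ^ s = \<xi> ^ t" shows "s = t"
proof (rule ccontr)
  assume ne: "s \<noteq> t"
  { fix a b assume ab: "a < b" "b < p" "\<xi> ^ a = \<xi> ^ b"
    have "\<xi> ^ b = \<xi> ^ a * \<xi> ^ (b - a)" using ab by (metis ab(1) le_add_diff_inverse less_imp_le power_add)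
    then have "\<xi> ^ (b - a) = 1" using ab xi_nz by simp
    then have "p dvd (b - a)" using xi_pow_eq_1 by blast
    then have False using ab by (meson diff_le_self dvd_imp_le le_less_trans less_irrefl zero_less_diff)
  }
  then show False using assms ne by (metis linorder_neqE_nat)
qed

lemma xi_pow_eq_iff: "\<xi> ^ s = \<xi> ^ t \<longleftrightarrow> s mod p = t mod p"
proof -
  have p0: "p > 0" using pp prime_gt_0_nat by blast
  have "\<xi> ^ s = \<xi> ^ t \<longleftrightarrow> \<xi> ^ (s mod p) = \<xi> ^ (t mod p)" using xi_pow_mod by metis
  also have "\<dots> \<longleftrightarrow> s mod p = t mod p" using xi_pow_inj p0 by auto
  finally show ?thesis .
qed

lemma root_of_unity: assumes z: "z ^ p = 1" shows "\<exists>s<p. z = \<xi> ^ s"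
proof (rule ccontr)
  assume nz: "\<not> (\<exists>s<p. z = \<xi> ^ s)"
  have p0: "p > 0" using pp prime_gt_0_nat by blast
  define q :: "'a poly" where "q = monom 1 p + [:-1:]"
  have pq: "poly q x = x ^ p - 1" for x by (simp add: q_def poly_monom)
  have dq: "degree q = p" using p0 unfolding q_def by (subst degree_add_eq_left) (auto simp: degree_monom_eq)
  have q0: "q \<noteq> 0" using dq p0 by auto
  define R where "R = (\<lambda>s. \<xi> ^ s) ` {..<p}"
  have cR: "card R = p" unfolding R_def
    by (subst card_image) (auto intro!: inj_onI xi_pow_inj)
  have "insert z R \<subseteq> {x. poly q x = 0}"
    using z unfolding R_def pq by (auto simp: power_mult[symmetric] mult.commute[of _ p] power_mult xp)
  then have "card (insert z R) \<le> card {x. poly q x = 0}"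
    by (intro card_mono poly_roots_finite q0)
  also have "\<dots> \<le> p" using card_poly_roots_bound[OF q0] dq by simp
  finally have "card (insert z R) \<le> p" .
  moreover have "z \<notin> R" using nz unfolding R_def by auto
  then have "card (insert z R) = Suc p" using cR unfolding R_def by simp
  ultimately show False by simp
qed

end


definition inE :: "'a::field set \<Rightarrow> 'a poly \<Rightarrow> bool" where
  "inE E h \<longleftrightarrow> (\<forall>n. coeff h n \<in> E)"

context
  fixes E :: "'a::field set"
  assumes sfE: "is_subfield E"
begin

lemma inE_0: "inE E 0" by (simp add: inE_def sf_0[OF sfE])
lemma inE_const: "c \<in> E \<Longrightarrow> inE E [:c:]"
  by (simp add: inE_def coeff_pCons sf_0[OF sfE] split: nat.split)
lemma inE_1: "inE E 1" by (simp add: inE_def sf_0[OF sfE] sf_1[OF sfE])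
lemma inE_add: "inE E f \<Longrightarrow> inE E g \<Longrightarrow> inE E (f + g)"
  by (simp add: inE_def sf_add[OF sfE])
lemma inE_diff: "inE E f \<Longrightarrow> inE E g \<Longrightarrow> inE E (f - g)"
  by (simp add: inE_def sf_diff[OF sfE])
lemma inE_uminus: "inE E f \<Longrightarrow> inE E (- f)"
  by (simp add: inE_def sf_uminus[OF sfE])
lemma inE_mult: "inE E f \<Longrightarrow> inE E g \<Longrightarrow> inE E (f * g)"
  unfolding inE_def
  by (intro allI coeff_mult_semiring_closed[of E]) (auto simp: sf_0[OF sfE] sf_add[OF sfE] sf_mult[OF sfE])
lemma inE_smult: "c \<in> E \<Longrightarrow> inE E f \<Longrightarrow> inE E (smult c f)"
  by (simp add: inE_def sf_mult[OF sfE])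
lemma inE_monom: "c \<in> E \<Longrightarrow> inE E (monom c n)"
  by (simp add: inE_def coeff_monom sf_0[OF sfE])
lemma inE_power: "inE E f \<Longrightarrow> inE E (f ^ n)"
  by (induction n) (auto simp: inE_1 inE_mult)
lemma inE_prod: "(\<And>i. i \<in> A \<Longrightarrow> inE E (f i)) \<Longrightarrow> inE E (prod f A)"
  by (induction A rule: infinite_finite_induct) (auto simp: inE_1 inE_mult)
lemma inE_pcompose_lin: "a \<in> E \<Longrightarrow> inE E f \<Longrightarrow> inE E (pcompose f [:0, a:])"
  by (simp add: inE_def coeff_pcompose_linear sf_mult[OF sfE] sf_power[OF sfE])
lemma inE_poly0: "inE E f \<Longrightarrow> poly f 0 \<in> E"
  by (simp add: inE_def poly_0_coeff_0)
lemma inE_coeff: "inE E f \<Longrightarrow> coeff f n \<in> E"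
  by (simp add: inE_def)

lemma inE_div_monic_aux:
  assumes g: "inE E g" "lead_coeff g = 1" "degree g > 0" and f: "inE E f"
  shows "\<exists>q r. inE E q \<and> inE E r \<and> f = q * g + r \<and> (r = 0 \<or> degree r < degree g)"
  using f
proof (induction "degree f" arbitrary: f rule: less_induct)
  case (less f)
  show ?case
  proof (cases "degree f < degree g")
    case True then show ?thesis using less.prems by (intro exI[of _ 0] exI[of _ f]) (auto simp: inE_0)
  next
    case False
    then have dg: "degree g \<le> degree f" by auto
    define k where "k = degree f - degree g"
    define m where "m = monom (lead_coeff f) k"
    define f' where "f' = f - m * g"
    have im: "inE E m" unfolding m_def by (rule inE_monom) (use less.prems in \<open>simp add: inE_def\<close>)
    have if': "inE E f'" unfolding f'_def by (intro inE_diff inE_mult less.prems im g(1))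
    have "degree f' < degree f"
    proof (rule degree_lessI)
      show "f' \<noteq> 0 \<or> 0 < degree f" using dg g(3) by auto
      show "\<forall>n\<ge>degree f. coeff f' n = 0"
      proof (intro allI impI)
        fix n assume n: "degree f \<le> n"
        have "coeff (m * g) n = lead_coeff f * coeff g (n - k)"
          unfolding m_def coeff_monom_mult using n k_def by auto
        moreover have "n - k \<ge> degree g" using n k_def dg by auto
        ultimately show "coeff f' n = 0"
        proof (cases "n = degree f")
          case True
          then have "n - k = degree g" using k_def dg by auto
          then show ?thesis using \<open>coeff (m * g) n = _\<close> True g(2) by (simp add: f'_def)
        next
          case False
          then have "n > degree f" using n by auto
          then have "coeff f n = 0" by (simp add: coeff_eq_0)
          moreover have "n - k > degree g" using \<open>n > degree f\<close> k_def dg by auto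
          then have "coeff g (n - k) = 0" by (simp add: coeff_eq_0)
          ultimately show ?thesis using \<open>coeff (m * g) n = _\<close> by (simp add: f'_def)
        qed
      qed
    qed
    then obtain q r where qr: "inE E q" "inE E r" "f' = q * g + r" "r = 0 \<or> degree r < degree g"
      using less.hyps if' by blast
    have "f = (q + m) * g + r" using qr(3) unfolding f'_def by (simp add: algebra_simps)
    then show ?thesis using qr im by (intro exI[of _ "q + m"] exI[of _ r]) (auto simp: inE_add)
  qed
qed

lemma inE_div_monic:
  assumes g: "inE E g" "lead_coeff g = 1" and f: "inE E f"
  shows "\<exists>q r. inE E q \<and> inE E r \<and> f = q * g + r \<and> (r = 0 \<or> degree r < degree g)"
proof (cases "degree g = 0")
  case True
  then have "g = [:1:]" using g(2) by (metis degree_0_id)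
  then show ?thesis using f by (intro exI[of _ f] exI[of _ 0]) (auto simp: inE_0 one_pCons[symmetric])
next
  case False then show ?thesis using inE_div_monic_aux assms by blast
qed

end

lemma prod_roots_dvd:
  fixes f :: "'a::field poly"
  assumes "finite T" "\<And>z. z \<in> T \<Longrightarrow> poly f z = 0"
  shows "(\<Prod>z\<in>T. [:-z, 1:]) dvd f"
  using assms
proof (induction T rule: finite_induct)
  case empty then show ?case by simp
next
  case (insert z T)
  then have "(\<Prod>z\<in>T. [:-z, 1:]) dvd f" by auto
  then obtain s where s: "f = (\<Prod>z\<in>T. [:-z, 1:]) * s" by (elim dvdE)
  have "poly (\<Prod>w\<in>T. [:-w, 1:]) z \<noteq> 0"
    using insert.hyps by (auto simp: poly_prod)
  moreover have "poly f z = 0" using insert.prems by auto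
  ultimately have "poly s z = 0" using s by simp
  then have "[:-z, 1:] dvd s" by (simp add: poly_eq_0_iff_dvd)
  then have "[:-z, 1:] * (\<Prod>z\<in>T. [:-z, 1:]) dvd s * (\<Prod>z\<in>T. [:-z, 1:])"
    by (rule mult_dvd_mono) simp
  then show ?case using s by (simp only: prod.insert[OF insert.hyps] mult.commute[of s])
qed

lemma monic_dvd_prod_linear:
  fixes r :: "'a::field poly"
  assumes "finite T" "lead_coeff r = 1" "r dvd (\<Prod>z\<in>T. [:-z, 1:])"
  shows "\<exists>S\<subseteq>T. r = (\<Prod>z\<in>S. [:-z, 1:])"
  using assms
proof (induction T arbitrary: r rule: finite_induct)
  case empty
  then obtain c where "r = [:c:]" by (auto simp: is_unit_poly_iff)
  then have "r = 1" using empty.prems by (simp add: one_pCons)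
  then show ?case by auto
next
  case (insert z T)
  have P: "(\<Prod>w\<in>insert z T. [:-w, 1:]) = [:-z, 1:] * (\<Prod>w\<in>T. [:-w, 1:])"
    using insert.hyps by simp
  show ?case
  proof (cases "poly r z = 0")
    case True
    then obtain r' where r': "r = [:-z, 1:] * r'" by (auto simp: poly_eq_0_iff_dvd elim: dvdE)
    have "lead_coeff ([:-z, 1:] * r') = 1" using insert.prems(1) by (simp only: r'[symmetric])
    then have "lead_coeff r' = 1" by (simp only: lead_coeff_mult) simp
    moreover have "r' dvd (\<Prod>w\<in>T. [:-w, 1:])"
    proof -
      have "[:-z, 1:] * r' dvd [:-z, 1:] * (\<Prod>w\<in>T. [:-w, 1:])"
        using insert.prems(2) by (simp only: r'[symmetric] P[symmetric])
      then show ?thesis by (subst (asm) dvd_mult_cancel_left) auto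
    qed
    ultimately obtain S where "S \<subseteq> T" "r' = (\<Prod>w\<in>S. [:-w, 1:])" using insert.IH by blast
    moreover have "z \<notin> S" using \<open>S \<subseteq> T\<close> insert.hyps by auto
    ultimately show ?thesis using r' by (intro exI[of _ "insert z S"]) (auto simp: finite_subset[OF _ insert.hyps(1)])
  next
    case False
    obtain s where s: "[:-z, 1:] * (\<Prod>w\<in>T. [:-w, 1:]) = r * s" using insert.prems(2) P by (auto elim: dvdE)
    have "poly (r * s) z = 0" using s[symmetric] by simp
    then have "poly s z = 0" using False by simp
    then obtain s' where s': "s = [:-z, 1:] * s'" by (auto simp: poly_eq_0_iff_dvd elim: dvdE)
    have "[:-z, 1:] * (\<Prod>w\<in>T. [:-w, 1:]) = [:-z, 1:] * (r * s')" using s s' by (simp add: algebra_simps)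
    then have "(\<Prod>w\<in>T. [:-w, 1:]) = r * s'"
      by (subst (asm) mult_cancel_left) auto
    then have "r dvd (\<Prod>w\<in>T. [:-w, 1:])" by auto
    then obtain S where "S \<subseteq> T" "r = (\<Prod>w\<in>S. [:-w, 1:])" using insert.IH insert.prems(1) by blast
    then show ?thesis by auto
  qed
qed

lemma funpow_mult_hom:
  assumes hm: "\<And>x y. x \<in> S \<Longrightarrow> y \<in> S \<Longrightarrow> h (x * y) = h x * h y"
    and hS: "\<And>x. x \<in> S \<Longrightarrow> h x \<in> S"
  shows "x \<in> S \<Longrightarrow> y \<in> S \<Longrightarrow> (h ^^ k) (x * y) = (h ^^ k) x * (h ^^ k) y \<and> (h ^^ k) x \<in> S"
proof (induction k arbitrary: x y)
  case 0 then show ?case by simp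
next
  case (Suc k)
  then show ?case using hm hS by (simp add: funpow_Suc_right del: funpow.simps)
qed

lemma binom_iter:
  fixes h :: "'a::comm_ring_1 \<Rightarrow> 'a"
  assumes hm: "\<And>x y. x \<in> S \<Longrightarrow> y \<in> S \<Longrightarrow> h (x * y) = h x * h y"
    and hS: "\<And>x. x \<in> S \<Longrightarrow> h x \<in> S"
    and mS: "\<And>x y. x \<in> S \<Longrightarrow> y \<in> S \<Longrightarrow> x * y \<in> S"
    and XS: "\<And>l. X l \<in> S"
    and hX: "\<And>l. h (X l) = X l * X (Suc l)"
  shows "(h ^^ k) (X j) = (\<Prod>l\<le>k. X (j + l) ^ (k choose l))"
proof (induction k arbitrary: j)
  case 0 then show ?case by simp
next
  case (Suc k)
  have "(h ^^ Suc k) (X j) = (h ^^ k) (X j * X (Suc j))"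
    by (simp add: funpow_Suc_right hX del: funpow.simps)
  also have "\<dots> = (h ^^ k) (X j) * (h ^^ k) (X (Suc j))"
    using funpow_mult_hom[OF hm hS, of "X j" "X (Suc j)" k] XS by auto
  also have "\<dots> = (\<Prod>l\<le>k. X (j + l) ^ (k choose l)) * (\<Prod>l\<le>k. X (Suc j + l) ^ (k choose l))"
    using Suc.IH by simp
  also have "(\<Prod>l\<le>k. X (j + l) ^ (k choose l)) = X j * (\<Prod>l\<le>k. X (Suc j + l) ^ (k choose Suc l))"
  proof -
    have "(\<Prod>l\<le>Suc k. X (j + l) ^ (k choose l)) = X j * (\<Prod>l\<le>k. X (Suc j + l) ^ (k choose Suc l))"
      by (subst prod.atMost_Suc_shift) simp
    moreover have "(\<Prod>l\<le>Suc k. X (j + l) ^ (k choose l)) = (\<Prod>l\<le>k. X (j + l) ^ (k choose l))"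
      by (simp add: binomial_eq_0)
    ultimately show ?thesis by simp
  qed
  also have "X j * (\<Prod>l\<le>k. X (Suc j + l) ^ (k choose Suc l)) * (\<Prod>l\<le>k. X (Suc j + l) ^ (k choose l))
      = X j * (\<Prod>l\<le>k. X (Suc j + l) ^ (Suc k choose Suc l))"
    by (simp add: power_add prod.distrib mult_ac)
  also have "\<dots> = (\<Prod>l\<le>Suc k. X (j + l) ^ (Suc k choose l))"
    by (subst prod.atMost_Suc_shift) simp
  finally show ?case .
qed


lemma poly_in_subfield:
  assumes "is_subfield T" "inE T f" "z \<in> T"
  shows "poly f z \<in> T"
  unfolding poly_altdef
  by (intro sf_sum[OF assms(1)] sf_mult[OF assms(1)] sf_power[OF assms(1)] inE_coeff[OF assms(1) assms(2)] assms(3))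

context
  fixes E :: "'a::field set" and \<tau> :: "'a \<Rightarrow> 'a"
  assumes sfE: "is_subfield E" and ht: "fhom E \<tau>"
begin

lemma mp_coeff: "coeff (map_poly \<tau> f) n = \<tau> (coeff f n)"
  by (simp add: coeff_map_poly fh_0[OF sfE ht])

lemma mp_add: "inE E f \<Longrightarrow> inE E g \<Longrightarrow> map_poly \<tau> (f + g) = map_poly \<tau> f + map_poly \<tau> g"
  by (rule poly_eqI) (simp add: mp_coeff fh_add[OF sfE ht] inE_coeff[OF sfE])

lemma mp_diff: "inE E f \<Longrightarrow> inE E g \<Longrightarrow> map_poly \<tau> (f - g) = map_poly \<tau> f - map_poly \<tau> g"
  by (rule poly_eqI) (simp add: mp_coeff fh_diff[OF sfE ht] inE_coeff[OF sfE])

lemma mp_mult: "inE E f \<Longrightarrow> inE E g \<Longrightarrow> map_poly \<tau> (f * g) = map_poly \<tau> f * map_poly \<tau> g"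
proof (rule poly_eqI)
  fix n assume f: "inE E f" and g: "inE E g"
  have "coeff (map_poly \<tau> (f * g)) n = \<tau> (\<Sum>i\<le>n. coeff f i * coeff g (n - i))"
    by (simp add: mp_coeff coeff_mult)
  also have "\<dots> = (\<Sum>i\<le>n. \<tau> (coeff f i * coeff g (n - i)))"
    by (rule fh_sum[OF sfE ht]) (intro sf_mult[OF sfE] inE_coeff[OF sfE] f g)
  also have "\<dots> = (\<Sum>i\<le>n. \<tau> (coeff f i) * \<tau> (coeff g (n - i)))"
    by (intro sum.cong refl fh_mult[OF sfE ht] inE_coeff[OF sfE] f g)
  also have "\<dots> = coeff (map_poly \<tau> f * map_poly \<tau> g) n"
    by (simp add: mp_coeff coeff_mult)
  finally show "coeff (map_poly \<tau> (f * g)) n = coeff (map_poly \<tau> f * map_poly \<tau> g) n" .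
qed

lemma mp_const: "map_poly \<tau> [:c:] = [:\<tau> c:]"
  by (rule poly_eqI) (simp add: mp_coeff coeff_pCons fh_0[OF sfE ht] split: nat.split)

lemma mp_monom: "map_poly \<tau> (monom c n) = monom (\<tau> c) n"
  by (rule poly_eqI) (simp add: mp_coeff coeff_monom fh_0[OF sfE ht])

lemma mp_X: "map_poly \<tau> [:0, 1:] = [:0, 1:]"
  by (rule poly_eqI) (simp add: mp_coeff coeff_pCons fh_0[OF sfE ht] fh_1[OF sfE ht] split: nat.split)

lemma mp_power: "inE E f \<Longrightarrow> map_poly \<tau> (f ^ n) = map_poly \<tau> f ^ n"
proof (induction n)
  case 0
  have "map_poly \<tau> [:1:] = [:1:]" by (simp add: mp_const fh_1[OF sfE ht])
  then show ?case by (simp add: one_pCons)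
next
  case (Suc n) then show ?case by (simp add: mp_mult inE_power[OF sfE])
qed

lemma mp_inE: "inE E f \<Longrightarrow> \<tau> ` E \<subseteq> T \<Longrightarrow> inE T (map_poly \<tau> f)"
  by (auto simp: inE_def mp_coeff)

end

definition adj :: "'a::field set \<Rightarrow> 'a \<Rightarrow> 'a set" where
  "adj E \<beta> = {poly h \<beta> | h. inE E h}"

locale kstep =
  fixes p :: nat and \<xi> :: "'a::field" and E :: "'a set" and b \<beta> :: 'a
  assumes pp: "prime p" and xp: "\<xi> ^ p = 1" and x1: "\<xi> \<noteq> 1"
    and sfE: "is_subfield E" and xiE: "\<xi> \<in> E" and bE: "b \<in> E" and bb: "\<beta> ^ p = b"
    and npow: "\<not> (\<exists>y\<in>E. y ^ p = b)"
begin

definition XP :: "'a poly" where "XP = monom 1 p + [:- b:]"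

lemma p0: "p > 0" using pp prime_gt_0_nat by blast
lemma p1: "p > 1" using pp prime_gt_1_nat by blast

lemma b_nz: "b \<noteq> 0"
  using npow sf_0[OF sfE] p0 by (metis zero_power)

lemma beta_nz: "\<beta> \<noteq> 0" using b_nz bb p0 by auto

lemma xi_nz': "\<xi> \<noteq> 0" using xi_nz[OF pp xp x1] .

lemma XP_inE: "inE E XP"
  unfolding XP_def by (intro inE_add[OF sfE] inE_monom[OF sfE] inE_const[OF sfE] sf_1[OF sfE] sf_uminus[OF sfE] bE)

lemma poly_XP: "poly XP x = x ^ p - b"
  by (simp add: XP_def poly_monom)

lemma degree_XP: "degree XP = p"
  unfolding XP_def using p0 by (subst degree_add_eq_left) (auto simp: degree_monom_eq)

lemma lead_XP: "lead_coeff XP = 1"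
  using degree_XP p0 by (simp add: XP_def coeff_monom coeff_pCons split: nat.split)

definition R :: "'a set" where "R = (\<lambda>k. \<xi> ^ k * \<beta>) ` {..<p}"

lemma card_R: "card R = p"
  unfolding R_def
proof (subst card_image)
  show "inj_on (\<lambda>k. \<xi> ^ k * \<beta>) {..<p}"
    by (rule inj_onI) (use beta_nz xi_pow_inj[OF pp xp x1] in auto)
qed simp

lemma R_roots: "z \<in> R \<Longrightarrow> z ^ p = b"
  unfolding R_def using bb xp by (auto simp: power_mult_distrib power_mult[symmetric] mult.commute[of _ p] power_mult)

lemma XP_prod: "XP = (\<Prod>z\<in>R. [:- z, 1:])"
proof -
  have fin: "finite R" unfolding R_def by simp
  have "(\<Prod>z\<in>R. [:- z, 1:]) dvd XP"
    by (rule prod_roots_dvd[OF fin]) (simp add: poly_XP R_roots)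
  then obtain s where s: "XP = (\<Prod>z\<in>R. [:- z, 1:]) * s" by (elim dvdE)
  have XP0: "XP \<noteq> 0" using degree_XP p0 by auto
  then have s0: "s \<noteq> 0" using s by auto
  have dP: "degree (\<Prod>z\<in>R. [:- z, 1:]) = p"
    by (subst degree_prod_sum_eq) (auto simp: card_R)
  have lP: "lead_coeff (\<Prod>z\<in>R. [:- z, 1:]) = 1" by (simp add: lead_coeff_prod)
  have P0: "(\<Prod>z\<in>R. [:- z, 1:]) \<noteq> 0" using lP by auto
  have "degree XP = degree (\<Prod>z\<in>R. [:- z, 1:]) + degree s"
    using s degree_mult_eq[OF P0 s0] by simp
  then have "degree s = 0" using dP degree_XP by simp
  moreover have "lead_coeff s = 1" using s lead_XP lP by (metis lead_coeff_mult mult_1)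
  ultimately have "s = 1" by (metis degree_0_id one_pCons)
  then show ?thesis using s by simp
qed

lemma indep:
  assumes h: "inE E h" "degree h < p" "poly h \<beta> = 0"
  shows "h = 0"
proof (rule ccontr)
  assume hnz: "h \<noteq> 0"
  define D where "D = {d. \<exists>r. inE E r \<and> r \<noteq> 0 \<and> poly r \<beta> = 0 \<and> degree r = d}"
  have "degree h \<in> D" using h hnz unfolding D_def by blast
  define d0 where "d0 = (LEAST d. d \<in> D)"
  have d0D: "d0 \<in> D" unfolding d0_def using \<open>degree h \<in> D\<close> by (rule LeastI)
  have d0le: "d0 \<le> degree h" unfolding d0_def using \<open>degree h \<in> D\<close> by (rule Least_le)
  have d0min: "\<And>d. d \<in> D \<Longrightarrow> d0 \<le> d" unfolding d0_def by (rule Least_le)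
  obtain r0 where r0: "inE E r0" "r0 \<noteq> 0" "poly r0 \<beta> = 0" "degree r0 = d0"
    using d0D unfolding D_def by blast
  define r where "r = smult (inverse (lead_coeff r0)) r0"
  have lc0: "lead_coeff r0 \<noteq> 0" by (metis leading_coeff_0_iff r0(2))
  have ir: "inE E r" unfolding r_def
    by (intro inE_smult[OF sfE] sf_inverse[OF sfE] inE_coeff[OF sfE] r0(1))
  have lr: "lead_coeff r = 1" unfolding r_def using lc0 by simp
  have dr: "degree r = d0" unfolding r_def using lc0 r0 by simp
  have pr: "poly r \<beta> = 0" unfolding r_def using r0 by simp
  have r_nz: "r \<noteq> 0" using lr by auto
  obtain q s where qs: "inE E q" "inE E s" "XP = q * r + s" "s = 0 \<or> degree s < degree r"
    using inE_div_monic[OF sfE ir lr XP_inE] by blast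
  have "poly s \<beta> = 0" using qs(3) pr poly_XP bb by (metis add_0 diff_self mult_zero_right poly_add poly_mult)
  have s0: "s = 0"
  proof (rule ccontr)
    assume "s \<noteq> 0"
    then have "degree s \<in> D" using qs(2) \<open>poly s \<beta> = 0\<close> unfolding D_def by blast
    then show False using d0min qs(4) dr \<open>s \<noteq> 0\<close> by fastforce
  qed
  then have "r dvd (\<Prod>z\<in>R. [:- z, 1:])" using qs(3) XP_prod by simp
  then obtain S where S: "S \<subseteq> R" "r = (\<Prod>z\<in>S. [:- z, 1:])"
    using monic_dvd_prod_linear[of R r] lr unfolding R_def by auto
  have finS: "finite S" using S(1) finite_subset unfolding R_def by auto
  have cS: "card S = d0"
    using dr S(2) finS by (simp add: degree_prod_sum_eq)
  have d0pos: "d0 > 0"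
  proof (rule ccontr)
    assume "\<not> d0 > 0"
    then have "S = {}" using cS finS by auto
    then have "r = 1" using S by simp
    then show False using pr by simp
  qed
  have d0p: "d0 < p" using d0le h(2) by simp
  have "poly r 0 = (\<Prod>z\<in>S. - z)" using S(2) by (simp add: poly_prod)
  also have "\<dots> = (\<Prod>z\<in>S. (- z / \<beta>) * \<beta>)" by (intro prod.cong refl) (use beta_nz in simp)
  also have "\<dots> = (\<Prod>z\<in>S. - z / \<beta>) * \<beta> ^ d0" using cS by (simp only: prod.distrib prod_constant)
  finally have eq: "poly r 0 = (\<Prod>z\<in>S. - z / \<beta>) * \<beta> ^ d0" .
  have zE: "- z / \<beta> \<in> E" if "z \<in> S" for z
  proof -
    have "z \<in> R" using that S(1) by auto
    then obtain k where "z = \<xi> ^ k * \<beta>" unfolding R_def by auto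
    then have "- z / \<beta> = - (\<xi> ^ k)" using beta_nz by simp
    then show ?thesis using sf_uminus[OF sfE] sf_power[OF sfE xiE] by simp
  qed
  have Pnz: "(\<Prod>z\<in>S. - z / \<beta>) \<noteq> 0"
  proof -
    have "\<And>z. z \<in> S \<Longrightarrow> z \<noteq> 0" using S(1) beta_nz xi_nz' unfolding R_def by auto
    then show ?thesis using finS beta_nz by auto
  qed
  have bd: "\<beta> ^ d0 \<in> E"
  proof -
    have "\<beta> ^ d0 = poly r 0 / (\<Prod>z\<in>S. - z / \<beta>)" using eq Pnz by simp
    moreover have "poly r 0 \<in> E" by (rule inE_poly0[OF sfE ir])
    moreover have "(\<Prod>z\<in>S. - z / \<beta>) \<in> E" by (rule sf_prod[OF sfE]) (rule zE)
    ultimately show ?thesis using sf_divide[OF sfE] by simp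
  qed
  have "coprime d0 p"
  proof -
    have "\<not> p dvd d0" using d0pos d0p by (auto dest: dvd_imp_le)
    then show ?thesis using pp prime_imp_coprime coprime_commute by blast
  qed
  then obtain u where u: "[d0 * u = Suc 0] (mod p)" using cong_solve_coprime_nat by blast
  then have "(d0 * u) mod p = 1" using p1 unfolding cong_def by simp
  then have du: "d0 * u = p * (d0 * u div p) + 1" by (metis mult_div_mod_eq)
  have "(\<beta> ^ d0) ^ u = b ^ (d0 * u div p) * \<beta>"
    by (subst power_mult[symmetric], subst du) (simp add: power_add power_mult bb)
  then have "\<beta> = (\<beta> ^ d0) ^ u / b ^ (d0 * u div p)" using b_nz by (simp add: field_simps)
  then have "\<beta> \<in> E" using sf_divide[OF sfE] sf_power[OF sfE] bd bE by metis
  then show False using npow bb by blast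
qed

lemma reduce:
  assumes "inE E h"
  shows "\<exists>h'. inE E h' \<and> degree h' < p \<and> (\<forall>z. z ^ p = b \<longrightarrow> poly h' z = poly h z)"
proof -
  obtain q r where qr: "inE E q" "inE E r" "h = q * XP + r" "r = 0 \<or> degree r < degree XP"
    using inE_div_monic[OF sfE XP_inE lead_XP assms] by blast
  have "degree r < p" using qr(4) degree_XP p0 by auto
  moreover have "\<forall>z. z ^ p = b \<longrightarrow> poly r z = poly h z" using qr(3) by (simp add: poly_XP)
  ultimately show ?thesis using qr(2) by blast
qed

lemma vanish_map:
  assumes ht: "fhom E \<tau>" and h: "inE E h" "poly h \<beta> = 0" and z: "z ^ p = \<tau> b"
  shows "poly (map_poly \<tau> h) z = 0"
proof -
  obtain q r where qr: "inE E q" "inE E r" "h = q * XP + r" "r = 0 \<or> degree r < degree XP"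
    using inE_div_monic[OF sfE XP_inE lead_XP h(1)] by blast
  have "poly r \<beta> = 0" using qr(3) h(2) by (simp add: poly_XP bb)
  moreover have "degree r < p" using qr(4) degree_XP p0 by auto
  ultimately have r0: "r = 0" using indep qr(2) by blast
  have "map_poly \<tau> h = map_poly \<tau> q * map_poly \<tau> XP"
    using qr(3) r0 mp_mult[OF sfE ht qr(1) XP_inE] by simp
  moreover have "map_poly \<tau> XP = monom 1 p + [:- \<tau> b:]"
    unfolding XP_def
    by (simp add: mp_add[OF sfE ht] inE_monom[OF sfE] sf_1[OF sfE] inE_const[OF sfE] sf_uminus[OF sfE] bE
        mp_monom[OF sfE ht] mp_const[OF sfE ht] fh_1[OF sfE ht] fh_uminus[OF sfE ht])
  ultimately show ?thesis using z by (simp add: poly_monom)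
qed

lemma vanish:
  assumes h: "inE E h" "poly h \<beta> = 0" and z: "z ^ p = b"
  shows "poly h z = 0"
proof -
  have "fhom E id" by (simp add: fhom_def)
  from vanish_map[OF this h] z show ?thesis by (simp add: map_poly_idI)
qed

lemma poly_eq_roots:
  assumes "inE E h1" "inE E h2" "poly h1 \<beta> = poly h2 \<beta>" "z ^ p = b"
  shows "poly h1 z = poly h2 z"
  using vanish[of "h1 - h2" z] assms inE_diff[OF sfE] by simp

subsection \<open>The adjoined field\<close>

abbreviation "A \<equiv> adj E \<beta>"

lemma adjI: "inE E h \<Longrightarrow> poly h \<beta> \<in> A" unfolding adj_def by blast

lemma adjE_red:
  assumes "x \<in> A"
  obtains h where "inE E h" "degree h < p" "x = poly h \<beta>"
proof -
  obtain h0 where "inE E h0" "x = poly h0 \<beta>" using assms unfolding adj_def by blast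
  then show ?thesis using reduce[of h0] bb that by metis
qed

lemma E_sub_A: "E \<subseteq> A"
proof
  fix x assume "x \<in> E"
  then have "poly [:x:] \<beta> \<in> A" by (intro adjI inE_const[OF sfE])
  then show "x \<in> A" by simp
qed

lemma beta_A: "\<beta> \<in> A"
proof -
  have "poly [:0, 1:] \<beta> \<in> A" by (intro adjI) (simp add: inE_def coeff_pCons sf_0[OF sfE] sf_1[OF sfE] split: nat.split)
  then show ?thesis by simp
qed

lemma A_add: assumes "x \<in> A" "y \<in> A" shows "x + y \<in> A"
proof -
  obtain hx hy where "inE E hx" "x = poly hx \<beta>" "inE E hy" "y = poly hy \<beta>" using assms unfolding adj_def by blast
  then show ?thesis using adjI[of "hx + hy"] inE_add[OF sfE] by simp
qed
lemma A_diff: assumes "x \<in> A" "y \<in> A" shows "x - y \<in> A"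
proof -
  obtain hx hy where "inE E hx" "x = poly hx \<beta>" "inE E hy" "y = poly hy \<beta>" using assms unfolding adj_def by blast
  then show ?thesis using adjI[of "hx - hy"] inE_diff[OF sfE] by simp
qed
lemma A_mult: assumes "x \<in> A" "y \<in> A" shows "x * y \<in> A"
proof -
  obtain hx hy where "inE E hx" "x = poly hx \<beta>" "inE E hy" "y = poly hy \<beta>" using assms unfolding adj_def by blast
  then show ?thesis using adjI[of "hx * hy"] inE_mult[OF sfE] by simp
qed

lemma degree_pc: "degree (pcompose h [:0, \<xi> ^ t:]) = degree h"
  using xi_nz' by (simp add: degree_pcompose)

lemma conj_nz:
  assumes h: "inE E h" "degree h < p" "poly h \<beta> \<noteq> 0"
  shows "poly h (\<xi> ^ t * \<beta>) \<noteq> 0"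
proof
  assume "poly h (\<xi> ^ t * \<beta>) = 0"
  then have "poly (pcompose h [:0, \<xi> ^ t:]) \<beta> = 0" by (simp add: poly_pcompose mult.commute)
  then have "pcompose h [:0, \<xi> ^ t:] = 0"
    using indep inE_pcompose_lin[OF sfE sf_power[OF sfE xiE] h(1)] degree_pc h(2) by metis
  then have "h = 0"
  proof (intro poly_eqI)
    fix n assume "pcompose h [:0, \<xi> ^ t:] = 0"
    then have "(\<xi> ^ t) ^ n * coeff h n = 0" by (metis coeff_0 coeff_pcompose_linear)
    then show "coeff h n = coeff 0 n" using xi_nz' by simp
  qed
  then show False using h(3) by simp
qed

lemma fixed_in_E:
  assumes H: "inE E H" "degree H < p" "poly H (\<xi> * \<beta>) = poly H \<beta>"
  shows "poly H \<beta> \<in> E"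
proof -
  have z: "poly (pcompose H [:0, \<xi>:] - H) \<beta> = 0" using H(3) by (simp add: poly_pcompose mult.commute)
  have i: "inE E (pcompose H [:0, \<xi>:] - H)"
    by (intro inE_diff[OF sfE] inE_pcompose_lin[OF sfE xiE] H(1))
  have d: "degree (pcompose H [:0, \<xi>:] - H) < p"
    using degree_pc[of H 1] H(2) by (intro degree_diff_less) auto
  have "pcompose H [:0, \<xi>:] - H = 0" using indep[OF i d z] .
  then have eq: "pcompose H [:0, \<xi>:] = H" by simp
  have "coeff H n = 0" if "n > 0" for n
  proof (cases "n < p")
    case True
    have "\<xi> ^ n * coeff H n = coeff H n" using arg_cong[OF eq, of "\<lambda>f. coeff f n"]
      by (simp add: coeff_pcompose_linear)
    moreover have "\<xi> ^ n \<noteq> 1" using xi_pow_eq_1[OF pp xp x1, of n] that True by (auto dest: dvd_imp_le)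
    ultimately show ?thesis by (metis mult_cancel_right2)
  next
    case False then show ?thesis using H(2) by (simp add: coeff_eq_0)
  qed
  then have "H = [:coeff H 0:]"
    by (intro poly_eqI) (auto simp: coeff_pCons split: nat.split)
  then have "poly H \<beta> = coeff H 0" by (metis poly_pCons poly_0 mult_zero_right add_0_right)
  then show ?thesis using inE_coeff[OF sfE H(1)] by simp
qed

lemma A_inverse:
  assumes x: "x \<in> A"
  shows "inverse x \<in> A"
proof (cases "x = 0")
  case True then show ?thesis using E_sub_A sf_0[OF sfE] by auto
next
  case False
  obtain h where h: "inE E h" "degree h < p" "x = poly h \<beta>" using adjE_red[OF x] by blast
  define f where "f = (\<lambda>t. poly h (\<xi> ^ t * \<beta>))"
  define hh where "hh = (\<lambda>t. pcompose h [:0, \<xi> ^ t:])"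
  have fpoly: "f t = poly (hh t) \<beta>" for t by (simp add: f_def hh_def poly_pcompose mult.commute)
  have ihh: "inE E (hh t)" for t unfolding hh_def by (intro inE_pcompose_lin[OF sfE] sf_power[OF sfE xiE] h(1))
  have fnz: "f t \<noteq> 0" for t unfolding f_def using conj_nz h False by auto
  define N where "N = (\<Prod>t<p. f t)"
  have N_poly: "N = poly (\<Prod>t<p. hh t) \<beta>" unfolding N_def by (simp add: fpoly poly_prod)
  have iP: "inE E (\<Prod>t<p. hh t)" by (intro inE_prod[OF sfE] ihh)
  obtain H where H: "inE E H" "degree H < p" "\<forall>z. z ^ p = b \<longrightarrow> poly H z = poly (\<Prod>t<p. hh t) z"
    using reduce[OF iP] by blast
  have xb: "(\<xi> * \<beta>) ^ p = b" using xp bb by (simp add: power_mult_distrib)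
  have "poly H (\<xi> * \<beta>) = (\<Prod>t<p. poly h (\<xi> ^ t * (\<xi> * \<beta>)))"
    using H(3) xb by (simp add: poly_prod hh_def poly_pcompose mult.commute)
  also have "\<dots> = (\<Prod>t<p. f (Suc t))" by (intro prod.cong refl) (simp add: f_def mult_ac)
  also have "\<dots> = N"
  proof -
    obtain m where m: "p = Suc m" using p0 by (cases p) auto
    have "(\<Prod>t<p. f (Suc t)) = (\<Prod>t<m. f (Suc t)) * f (Suc m)" unfolding m by (rule prod.lessThan_Suc)
    also have "f (Suc m) = f 0" using m xp unfolding f_def by (metis power_0)
    also have "(\<Prod>t<m. f (Suc t)) * f 0 = (\<Prod>t<Suc m. f t)" by (subst prod.lessThan_Suc_shift) (simp only: mult.commute)
    finally show ?thesis unfolding N_def m .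
  qed
  finally have "poly H (\<xi> * \<beta>) = N" .
  moreover have "poly H \<beta> = N" using H(3) bb N_poly by simp
  ultimately have NE: "N \<in> E" using fixed_in_E[OF H(1) H(2)] by metis
  have Nnz: "N \<noteq> 0" unfolding N_def using fnz by simp
  have Nsplit: "N = x * (\<Prod>t<p - 1. f (Suc t))"
  proof -
    have "N = (\<Prod>t<Suc (p - 1). f t)" unfolding N_def using p0 by simp
    also have "\<dots> = f 0 * (\<Prod>t<p - 1. f (Suc t))" by (rule prod.lessThan_Suc_shift)
    finally show ?thesis using h(3) by (simp add: f_def)
  qed
  have "inverse x = (\<Prod>t<p - 1. f (Suc t)) * inverse N" using Nsplit Nnz False by (simp add: field_simps)
  moreover have "(\<Prod>t<p - 1. f (Suc t)) \<in> A"
  proof -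
    have "(\<Prod>t<p - 1. f (Suc t)) = poly (\<Prod>t<p - 1. hh (Suc t)) \<beta>" by (simp add: fpoly poly_prod)
    then show ?thesis using adjI inE_prod[OF sfE ihh] by metis
  qed
  moreover have "inverse N \<in> A" using E_sub_A sf_inverse[OF sfE NE] by auto
  ultimately show ?thesis using A_mult by simp
qed

lemma A_subfield: "is_subfield A"
  unfolding is_subfield_def
proof (intro conjI ballI impI)
  show "0 \<in> A" using E_sub_A sf_0[OF sfE] by (rule subsetD)
  show "1 \<in> A" using E_sub_A sf_1[OF sfE] by (rule subsetD)
qed (simp_all add: A_add A_diff A_mult A_inverse)

lemma A_least: assumes "is_subfield T" "E \<subseteq> T" "\<beta> \<in> T" shows "A \<subseteq> T"
proof
  fix x assume "x \<in> A"
  then obtain h where h: "inE E h" "x = poly h \<beta>" unfolding adj_def by blast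
  then have "inE T h" using assms(2) by (auto simp: inE_def)
  then show "x \<in> T" using poly_in_subfield[OF assms(1) _ assms(3)] h(2) by simp
qed

lemma A_field_gen: "A = field_gen (E \<union> {\<beta>})"
proof
  show "A \<subseteq> field_gen (E \<union> {\<beta>})"
    by (rule A_least[OF field_gen_subfield]) (use field_gen_sub[of "E \<union> {\<beta>}"] in auto)
  show "field_gen (E \<union> {\<beta>}) \<subseteq> A"
    by (rule field_gen_least[OF A_subfield]) (use E_sub_A beta_A in auto)
qed

subsection \<open>Extension of homomorphisms\<close>

definition ext :: "('a \<Rightarrow> 'a) \<Rightarrow> 'a \<Rightarrow> 'a \<Rightarrow> 'a" where
  "ext \<tau> \<beta>' x = poly (map_poly \<tau> (SOME h. inE E h \<and> poly h \<beta> = x)) \<beta>'"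

context
  fixes \<tau> \<beta>'
  assumes ht: "fhom E \<tau>" and b': "\<beta>' ^ p = \<tau> b"
begin

lemma ext_eq: assumes h: "inE E h" shows "ext \<tau> \<beta>' (poly h \<beta>) = poly (map_poly \<tau> h) \<beta>'"
proof -
  define h0 where "h0 = (SOME h0. inE E h0 \<and> poly h0 \<beta> = poly h \<beta>)"
  have "inE E h0 \<and> poly h0 \<beta> = poly h \<beta>" unfolding h0_def by (rule someI[of _ h]) (simp add: h)
  then have h0: "inE E h0" "poly h0 \<beta> = poly h \<beta>" by auto
  have "poly (map_poly \<tau> (h0 - h)) \<beta>' = 0"
    by (rule vanish_map[OF ht]) (use h0 h inE_diff[OF sfE] b' in auto)
  then have "poly (map_poly \<tau> h0) \<beta>' = poly (map_poly \<tau> h) \<beta>'"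
    by (simp add: mp_diff[OF sfE ht h0(1) h])
  then show ?thesis unfolding ext_def h0_def by simp
qed

lemma ext_fhom: "fhom A (ext \<tau> \<beta>')"
  unfolding fhom_def
proof (intro conjI ballI)
  fix x y assume "x \<in> A" "y \<in> A"
  then obtain hx hy where hx: "inE E hx" "x = poly hx \<beta>" and hy: "inE E hy" "y = poly hy \<beta>"
    unfolding adj_def by blast
  have "ext \<tau> \<beta>' (x + y) = poly (map_poly \<tau> (hx + hy)) \<beta>'"
    using ext_eq[OF inE_add[OF sfE hx(1) hy(1)]] hx(2) hy(2) by simp
  also have "\<dots> = ext \<tau> \<beta>' x + ext \<tau> \<beta>' y"
    using hx hy by (simp add: ext_eq mp_add[OF sfE ht])
  finally show "ext \<tau> \<beta>' (x + y) = ext \<tau> \<beta>' x + ext \<tau> \<beta>' y" .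
  have "ext \<tau> \<beta>' (x * y) = poly (map_poly \<tau> (hx * hy)) \<beta>'"
    using ext_eq[OF inE_mult[OF sfE hx(1) hy(1)]] hx(2) hy(2) by simp
  also have "\<dots> = ext \<tau> \<beta>' x * ext \<tau> \<beta>' y"
    using hx hy by (simp add: ext_eq mp_mult[OF sfE ht])
  finally show "ext \<tau> \<beta>' (x * y) = ext \<tau> \<beta>' x * ext \<tau> \<beta>' y" .
next
  have "ext \<tau> \<beta>' (poly [:1:] \<beta>) = poly (map_poly \<tau> [:1:]) \<beta>'"
    by (rule ext_eq) (rule inE_const[OF sfE sf_1[OF sfE]])
  then show "ext \<tau> \<beta>' 1 = 1" by (simp add: mp_const[OF sfE ht] fh_1[OF sfE ht])
qed

lemma ext_E: "x \<in> E \<Longrightarrow> ext \<tau> \<beta>' x = \<tau> x"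
  using ext_eq[OF inE_const[OF sfE], of x] by (simp add: mp_const[OF sfE ht])

lemma ext_beta: "ext \<tau> \<beta>' \<beta> = \<beta>'"
proof -
  have "inE E [:0, 1:]" by (simp add: inE_def coeff_pCons sf_0[OF sfE] sf_1[OF sfE] split: nat.split)
  from ext_eq[OF this] show ?thesis by (simp add: mp_X[OF sfE ht])
qed

lemma ext_into:
  assumes T: "is_subfield T" "\<tau> ` E \<subseteq> T" "\<beta>' \<in> T" and x: "x \<in> A"
  shows "ext \<tau> \<beta>' x \<in> T"
proof -
  obtain h where h: "inE E h" "x = poly h \<beta>" using x unfolding adj_def by blast
  show ?thesis using h ext_eq poly_in_subfield[OF T(1) mp_inE[OF sfE ht h(1) T(2)] T(3)] by simp
qed

end

lemma ext_id_poly: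
  assumes h: "inE E h" and z: "z ^ p = b"
  shows "ext id z (poly h \<beta>) = poly h z"
proof -
  have "fhom E id" by (simp add: fhom_def)
  from ext_eq[OF this _ h] z show ?thesis by (simp add: map_poly_idI)
qed

subsection \<open>Kummer lemma\<close>

lemma kummer:
  assumes y: "y \<in> A" and yp: "y ^ p \<in> E"
  shows "\<exists>c\<in>E. \<exists>k<p. y = c * \<beta> ^ k"
proof (cases "y = 0")
  case True then show ?thesis using sf_0[OF sfE] p0 by (intro bexI[of _ 0] exI[of _ 0]) auto
next
  case False
  obtain h where h: "inE E h" "degree h < p" "y = poly h \<beta>" using adjE_red[OF y] by blast
  define w where "w = y ^ p"
  have xb: "(\<xi> * \<beta>) ^ p = b" using xp bb by (simp add: power_mult_distrib)
  define y' where "y' = poly h (\<xi> * \<beta>)"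
  have "poly (h ^ p - [:w:]) \<beta> = 0" using h(3) w_def by simp
  then have "poly (h ^ p - [:w:]) (\<xi> * \<beta>) = 0"
    using vanish[OF _ _ xb] inE_diff[OF sfE inE_power[OF sfE h(1)] inE_const[OF sfE yp[folded w_def]]] by blast
  then have "y' ^ p = y ^ p" unfolding y'_def w_def by simp
  then have "(y' / y) ^ p = 1" using False by (simp add: power_divide)
  then obtain s where s: "s < p" "y' / y = \<xi> ^ s" using root_of_unity[OF pp xp x1] by blast
  then have y's: "y' = \<xi> ^ s * y" using False by (simp add: field_simps)
  have z: "poly (pcompose h [:0, \<xi>:] - smult (\<xi> ^ s) h) \<beta> = 0"
    using y's h(3) unfolding y'_def by (simp add: poly_pcompose mult.commute)
  have i: "inE E (pcompose h [:0, \<xi>:] - smult (\<xi> ^ s) h)"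
    by (intro inE_diff[OF sfE] inE_pcompose_lin[OF sfE xiE] inE_smult[OF sfE] sf_power[OF sfE xiE] h(1))
  have d: "degree (pcompose h [:0, \<xi>:] - smult (\<xi> ^ s) h) < p"
    using degree_pc[of h 1] h(2) by (intro degree_diff_less) (auto simp: degree_smult_le le_less_trans)
  have "pcompose h [:0, \<xi>:] - smult (\<xi> ^ s) h = 0" using indep[OF i d z] .
  then have eq: "pcompose h [:0, \<xi>:] = smult (\<xi> ^ s) h" by simp
  have cz: "coeff h n = 0" if "n \<noteq> s" for n
  proof (cases "n < p")
    case True
    have "\<xi> ^ n * coeff h n = \<xi> ^ s * coeff h n" using arg_cong[OF eq, of "\<lambda>f. coeff f n"]
      by (simp add: coeff_pcompose_linear)
    moreover have "\<xi> ^ n \<noteq> \<xi> ^ s" using xi_pow_inj[OF pp xp x1 True s(1)] that by auto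
    ultimately show ?thesis by simp
  next
    case False then show ?thesis using h(2) by (simp add: coeff_eq_0)
  qed
  have "h = monom (coeff h s) s"
    by (rule poly_eqI) (simp add: coeff_monom cz)
  then have "y = coeff h s * \<beta> ^ s" using h(3) by (metis poly_monom)
  then show ?thesis using s(1) inE_coeff[OF sfE h(1)] by blast
qed

end


definition mh :: "'a::field set \<Rightarrow> ('a \<Rightarrow> 'a) \<Rightarrow> bool" where
  "mh K h \<longleftrightarrow> (\<forall>x\<in>K. \<forall>y\<in>K. h (x * y) = h x * h y) \<and> h 1 = 1 \<and> h 0 = 0 \<and> (\<forall>x\<in>K. h x \<in> K)"

context
  fixes K :: "'a::field set" and h
  assumes sfK: "is_subfield K" and mhh: "mh K h"
begin
lemma mh_mult: "x \<in> K \<Longrightarrow> y \<in> K \<Longrightarrow> h (x * y) = h x * h y" using mhh unfolding mh_def by blast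
lemma mh_1: "h 1 = 1" using mhh unfolding mh_def by blast
lemma mh_0: "h 0 = 0" using mhh unfolding mh_def by blast
lemma mh_in: "x \<in> K \<Longrightarrow> h x \<in> K" using mhh unfolding mh_def by blast
lemma mh_power: "x \<in> K \<Longrightarrow> h (x ^ n) = h x ^ n"
  by (induction n) (auto simp: mh_1 mh_mult sf_power[OF sfK])
lemma mh_prod: "(\<And>i. i \<in> A \<Longrightarrow> g i \<in> K) \<Longrightarrow> h (prod g A) = (\<Prod>i\<in>A. h (g i))"
  by (induction A rule: infinite_finite_induct) (auto simp: mh_1 mh_mult sf_prod[OF sfK])
lemma mh_inverse: "x \<in> K \<Longrightarrow> h (inverse x) = inverse (h x)"
proof (cases "x = 0")
  case True then show ?thesis by (simp add: mh_0)
next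
  case False
  assume x: "x \<in> K"
  have "h (x * inverse x) = h x * h (inverse x)" using mh_mult x sf_inverse[OF sfK x] by blast
  then have "h x * h (inverse x) = 1" using False by (simp add: mh_1)
  then show ?thesis by (metis inverse_unique)
qed
lemma mh_nz: "x \<in> K \<Longrightarrow> x \<noteq> 0 \<Longrightarrow> h x \<noteq> 0"
proof
  assume x: "x \<in> K" "x \<noteq> 0" "h x = 0"
  have "h (x * inverse x) = h x * h (inverse x)" using mh_mult x sf_inverse[OF sfK x(1)] by blast
  then show False using x by (simp add: mh_1)
qed
lemma mh_funpow: "mh K (h ^^ n)"
proof (induction n)
  case 0 then show ?case by (simp add: mh_def)
next
  case (Suc n) then show ?case unfolding mh_def using mh_mult mh_1 mh_0 mh_in by auto
qed
end

lemma fhom_mh: "is_subfield K \<Longrightarrow> fhom K h \<Longrightarrow> (\<forall>x\<in>K. h x \<in> K) \<Longrightarrow> mh K h"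
  unfolding mh_def using fh_mult fh_1 fh_0 by blast

lemma funpow_apply_add: "(f ^^ m) ((f ^^ n) x) = (f ^^ (m + n)) x"
  by (simp add: funpow_add)

locale msetup =
  fixes p :: nat and F K :: "'a::field set" and \<xi> a \<alpha> \<gamma> :: 'a and \<sigma> :: "'a \<Rightarrow> 'a"
  assumes pp: "prime p" and p_odd: "odd p"
    and sfF: "is_subfield F"
    and xiF: "\<xi> \<in> F" and xp: "\<xi> ^ p = 1" and x1: "\<xi> \<noteq> 1"
    and aF: "a \<in> F" and a0: "a \<noteq> 0" and aa: "\<alpha> ^ p = a"
    and K_def: "K = field_gen (F \<union> {\<alpha>})"
    and sig: "is_aut_over K F \<sigma>" and sa: "\<sigma> \<alpha> = \<xi> * \<alpha>"
    and roots: "\<forall>x\<in>K. \<exists>y. y ^ p = x"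
    and gK: "\<gamma> \<in> K" and g0: "\<gamma> \<noteq> 0"
begin

lemma p0: "p > 0" using pp prime_gt_0_nat by blast
lemma p1: "p > 1" using pp prime_gt_1_nat by blast
lemma p2: "p > 2" using p1 p_odd by (cases "p = 2") auto

lemma sfK: "is_subfield K" unfolding K_def by (rule field_gen_subfield)
lemma FK: "F \<subseteq> K" unfolding K_def using field_gen_sub by blast
lemma alphaK: "\<alpha> \<in> K" unfolding K_def using field_gen_sub by blast
lemma xiK: "\<xi> \<in> K" using FK xiF by blast
lemma alpha0: "\<alpha> \<noteq> 0" using aa a0 p0 by auto
lemma xi0: "\<xi> \<noteq> 0" using xi_nz[OF pp xp x1] .

lemma sig_F: "x \<in> F \<Longrightarrow> \<sigma> x = x" using sig unfolding is_aut_over_def by blast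
lemma sig_bij: "bij_betw \<sigma> K K" using sig unfolding is_aut_over_def by blast
lemma sig_K: "x \<in> K \<Longrightarrow> \<sigma> x \<in> K" using sig_bij by (meson bij_betwE)
lemma sig_fhom: "fhom K \<sigma>"
  unfolding fhom_def using sig sig_F[OF sf_1[OF sfF]] unfolding is_aut_over_def by blast

lemma sigp_fhom: "fhom K (\<sigma> ^^ n)" and sigp_K: "x \<in> K \<Longrightarrow> (\<sigma> ^^ n) x \<in> K"
  using fhom_funpow[OF sfK sig_fhom] sig_K by (auto simp: image_subset_iff)

lemma sigp_F: "x \<in> F \<Longrightarrow> (\<sigma> ^^ n) x = x"
  by (induction n) (auto simp: sig_F)

lemma sigp_xi: "(\<sigma> ^^ n) (\<xi> ^ k) = \<xi> ^ k"
  by (rule sigp_F) (rule sf_power[OF sfF xiF])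

lemma sigp_alpha: "(\<sigma> ^^ n) \<alpha> = \<xi> ^ n * \<alpha>"
proof (induction n)
  case 0 then show ?case by simp
next
  case (Suc n)
  have "(\<sigma> ^^ Suc n) \<alpha> = \<sigma> (\<xi> ^ n * \<alpha>)" using Suc by simp
  also have "\<dots> = \<sigma> (\<xi> ^ n) * \<sigma> \<alpha>" using fh_mult[OF sfK sig_fhom] sf_power[OF sfK xiK] alphaK by blast
  also have "\<dots> = \<xi> ^ Suc n * \<alpha>" using sig_F[OF sf_power[OF sfF xiF]] sa by simp
  finally show ?case .
qed

lemma sig_p: "x \<in> K \<Longrightarrow> (\<sigma> ^^ p) x = x"
proof -
  assume x: "x \<in> K"
  have "fhom K id" by (simp add: fhom_def)
  have "\<And>y. y \<in> field_gen (F \<union> {\<alpha>}) \<Longrightarrow> (\<sigma> ^^ p) y = id y"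
    by (rule fhom_agree[OF sfK sigp_fhom \<open>fhom K id\<close>]) (use FK alphaK sigp_F sigp_alpha xp in auto)
  then show ?thesis using x K_def by simp
qed

lemma sig_pq: "x \<in> K \<Longrightarrow> (\<sigma> ^^ (p * q)) x = x"
proof (induction q)
  case 0 then show ?case by simp
next
  case (Suc q)
  have "(\<sigma> ^^ (p * Suc q)) x = (\<sigma> ^^ p) ((\<sigma> ^^ (p * q)) x)" by (simp add: funpow_add)
  then show ?case using Suc sig_p by simp
qed

lemma sig_mod: "x \<in> K \<Longrightarrow> (\<sigma> ^^ n) x = (\<sigma> ^^ (n mod p)) x"
proof -
  assume x: "x \<in> K"
  have "(\<sigma> ^^ (n mod p)) ((\<sigma> ^^ (p * (n div p))) x) = (\<sigma> ^^ (n mod p + p * (n div p))) x"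
    by (rule funpow_apply_add)
  then have "(\<sigma> ^^ n) x = (\<sigma> ^^ (n mod p)) ((\<sigma> ^^ (p * (n div p))) x)" by simp
  also have "\<dots> = (\<sigma> ^^ (n mod p)) x" using sig_pq x by simp
  finally show ?thesis .
qed

lemma sigp_mh: "mh K (\<sigma> ^^ n)"
  by (rule fhom_mh[OF sfK sigp_fhom]) (use sigp_K in blast)

lemma sigp_surj: "y \<in> K \<Longrightarrow> \<exists>x\<in>K. (\<sigma> ^^ n) x = y"
proof -
  assume y: "y \<in> K"
  have e: "n + (p - 1) * n = p * n" using p0 by (cases p) auto
  have "(\<sigma> ^^ n) ((\<sigma> ^^ ((p - 1) * n)) y) = (\<sigma> ^^ (p * n)) y"
    by (simp only: funpow_apply_add e)
  also have "\<dots> = y" using sig_pq y by (simp add: mult.commute)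
  finally show ?thesis using sigp_K y by blast
qed

abbreviation pth :: "'a \<Rightarrow> bool" where "pth x \<equiv> pth_power_in p K x"

lemma pth_mh: "mh K h \<Longrightarrow> pth x \<Longrightarrow> pth (h x)"
  unfolding pth_power_in_def using mh_power[OF sfK] mh_in[OF sfK] mh_nz[OF sfK] by metis

lemma pth_mult: "pth x \<Longrightarrow> pth y \<Longrightarrow> pth (x * y)"
  unfolding pth_power_in_def
  by (metis mult_eq_0_iff power_mult_distrib sf_mult[OF sfK])

lemma pth_inverse: "pth x \<Longrightarrow> pth (inverse x)"
  unfolding pth_power_in_def
  by (metis inverse_nonzero_iff_nonzero power_inverse sf_inverse[OF sfK])

lemma pth_powI: "b \<in> K \<Longrightarrow> b \<noteq> 0 \<Longrightarrow> pth (b ^ p)"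
  unfolding pth_power_in_def by blast

lemma pth_K: "pth x \<Longrightarrow> x \<in> K \<and> x \<noteq> 0"
  unfolding pth_power_in_def using sf_power[OF sfK] p0 by auto

definition rho :: "'a \<Rightarrow> 'a" where "rho x = \<sigma> x / x"
definition sig' :: "'a \<Rightarrow> 'a" where "sig' = \<sigma> ^^ (p - 1)"
definition rho' :: "'a \<Rightarrow> 'a" where "rho' x = sig' x / x"

lemma sig'_pow: "sig' ^^ n = \<sigma> ^^ ((p - 1) * n)"
  unfolding sig'_def by (simp add: funpow_mult mult.commute)

lemma sig'_fhom: "fhom K sig'" and sig'_K: "x \<in> K \<Longrightarrow> sig' x \<in> K"
  unfolding sig'_def using sigp_fhom sigp_K by auto

lemma sig'p_mh: "mh K (sig' ^^ n)" unfolding sig'_pow by (rule sigp_mh)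
lemma sig'p_K: "x \<in> K \<Longrightarrow> (sig' ^^ n) x \<in> K" unfolding sig'_pow by (rule sigp_K)

lemma rho_mh: "mh K rho"
  unfolding mh_def rho_def
  using fh_mult[OF sfK sig_fhom] fh_1[OF sfK sig_fhom] fh_0[OF sfK sig_fhom] sig_K sf_divide[OF sfK]
  by (auto simp: times_divide_times_eq)

lemma rho'_mh: "mh K rho'"
  unfolding mh_def rho'_def
  using fh_mult[OF sfK sig'_fhom] fh_1[OF sfK sig'_fhom] fh_0[OF sfK sig'_fhom] sig'_K sf_divide[OF sfK]
  by (auto simp: times_divide_times_eq)

lemma rho_iter_eq: "rho_iter \<sigma> n = rho ^^ n"
  unfolding rho_iter_def rho_def by (simp add: fun_eq_iff)

lemma rhop_mh: "mh K (rho ^^ n)" by (rule mh_funpow[OF sfK rho_mh])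
lemma rho'p_mh: "mh K (rho' ^^ n)" by (rule mh_funpow[OF sfK rho'_mh])

lemma binom_gen:
  assumes hf: "fhom K h" and hK: "\<And>x. x \<in> K \<Longrightarrow> h x \<in> K" and x: "x \<in> K" "x \<noteq> 0"
  shows "(h ^^ k) x = (\<Prod>l\<le>k. (((\<lambda>y. h y / y) ^^ l) x) ^ (k choose l))"
proof -
  define r where "r = (\<lambda>y. h y / y)"
  have mr: "mh K r" unfolding mh_def r_def
    using fh_mult[OF sfK hf] fh_1[OF sfK hf] fh_0[OF sfK hf] hK sf_divide[OF sfK]
    by (auto simp: times_divide_times_eq)
  define S where "S = {y \<in> K. y \<noteq> 0}"
  have XS: "(r ^^ l) x \<in> S" for l
    unfolding S_def using mh_in[OF sfK mh_funpow[OF sfK mr]] mh_nz[OF sfK mh_funpow[OF sfK mr]] x by auto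
  have "(h ^^ k) ((r ^^ 0) x) = (\<Prod>l\<le>k. ((r ^^ (0 + l)) x) ^ (k choose l))"
  proof (rule binom_iter[where S = S])
    show "\<And>x y. x \<in> S \<Longrightarrow> y \<in> S \<Longrightarrow> h (x * y) = h x * h y" unfolding S_def using fh_mult[OF sfK hf] by auto
    show "\<And>x. x \<in> S \<Longrightarrow> h x \<in> S" unfolding S_def using hK fh_eq_0_iff[OF sfK hf] by auto
    show "\<And>x y. x \<in> S \<Longrightarrow> y \<in> S \<Longrightarrow> x * y \<in> S" unfolding S_def using sf_mult[OF sfK] by auto
    show "\<And>l. (r ^^ l) x \<in> S" by (rule XS)
    show "\<And>l. h ((r ^^ l) x) = (r ^^ l) x * (r ^^ Suc l) x"
      using XS unfolding S_def by (simp add: r_def)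
  qed
  then show ?thesis unfolding r_def by simp
qed

lemma sig_binom: "x \<in> K \<Longrightarrow> x \<noteq> 0 \<Longrightarrow> (\<sigma> ^^ k) x = (\<Prod>l\<le>k. ((rho ^^ l) x) ^ (k choose l))"
  using binom_gen[OF sig_fhom sig_K] unfolding rho_def by (simp add: fun_eq_iff[symmetric])

lemma sig'_binom: "x \<in> K \<Longrightarrow> x \<noteq> 0 \<Longrightarrow> (sig' ^^ k) x = (\<Prod>l\<le>k. ((rho' ^^ l) x) ^ (k choose l))"
  using binom_gen[OF sig'_fhom sig'_K] unfolding rho'_def by (simp add: fun_eq_iff[symmetric])

lemma prod_split_p: "(\<Prod>l\<le>p. f l) = f 0 * f p * (\<Prod>l\<in>{1..<p}. f l)"
proof -
  have "{..p} = insert 0 (insert p {1..<p})" using p0 by auto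
  then show ?thesis using p0 by (simp add: mult.assoc)
qed

lemma choose_div: "0 < l \<Longrightarrow> l < p \<Longrightarrow> p choose l = p * ((p choose l) div p)"
  using dvd_choose_prime[of l p] pp p0 by simp

lemma top_rel:
  assumes hf: "fhom K h" and hK: "\<And>x. x \<in> K \<Longrightarrow> h x \<in> K" and hp: "\<And>x. x \<in> K \<Longrightarrow> (h ^^ p) x = x"
    and x: "x \<in> K" "x \<noteq> 0"
  shows "(((\<lambda>y. h y / y) ^^ p) x) = inverse (\<Prod>l\<in>{1..<p}. (((\<lambda>y. h y / y) ^^ l) x) ^ (p choose l))"
proof -
  define r where "r = (\<lambda>y. h y / y)"
  have mr: "mh K r" unfolding mh_def r_def
    using fh_mult[OF sfK hf] fh_1[OF sfK hf] fh_0[OF sfK hf] hK sf_divide[OF sfK]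
    by (auto simp: times_divide_times_eq)
  have "x = (\<Prod>l\<le>p. ((r ^^ l) x) ^ (p choose l))"
    using binom_gen[OF hf hK x, of p] hp[OF x(1)] unfolding r_def by simp
  also have "\<dots> = x * (r ^^ p) x * (\<Prod>l\<in>{1..<p}. ((r ^^ l) x) ^ (p choose l))"
    by (subst prod_split_p) simp
  finally have "1 = (r ^^ p) x * (\<Prod>l\<in>{1..<p}. ((r ^^ l) x) ^ (p choose l))"
    using x(2) by (simp add: mult.assoc)
  then show ?thesis unfolding r_def[symmetric] by (metis inverse_unique mult.commute)
qed

lemma top_rel_pth:
  assumes hf: "fhom K h" and hK: "\<And>x. x \<in> K \<Longrightarrow> h x \<in> K" and hp: "\<And>x. x \<in> K \<Longrightarrow> (h ^^ p) x = x"
    and x: "x \<in> K" "x \<noteq> 0"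
  shows "((\<lambda>y. h y / y) ^^ p) x
    = (inverse (\<Prod>l\<in>{1..<p}. (((\<lambda>y. h y / y) ^^ l) x) ^ ((p choose l) div p))) ^ p"
proof -
  define r where "r = (\<lambda>y. h y / y)"
  have "(\<Prod>l\<in>{1..<p}. ((r ^^ l) x) ^ (p choose l)) = (\<Prod>l\<in>{1..<p}. (((r ^^ l) x) ^ ((p choose l) div p)) ^ p)"
  proof (intro prod.cong refl)
    fix l assume "l \<in> {1..<p}"
    then have "p choose l = p * ((p choose l) div p)" by (intro choose_div) auto
    then show "((r ^^ l) x) ^ (p choose l) = (((r ^^ l) x) ^ ((p choose l) div p)) ^ p"
      by (metis power_mult mult.commute)
  qed
  also have "\<dots> = (\<Prod>l\<in>{1..<p}. ((r ^^ l) x) ^ ((p choose l) div p)) ^ p"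
    by (simp only: prod_power_distrib)
  finally show ?thesis using top_rel[OF assms] unfolding r_def[symmetric] by (simp add: power_inverse)
qed

lemma rhop_in: "x \<in> K \<Longrightarrow> (rho ^^ n) x \<in> K" using mh_in[OF sfK rhop_mh] .
lemma rho'p_in: "x \<in> K \<Longrightarrow> (rho' ^^ n) x \<in> K" using mh_in[OF sfK rho'p_mh] .
lemma rhop_nz: "x \<in> K \<Longrightarrow> x \<noteq> 0 \<Longrightarrow> (rho ^^ n) x \<noteq> 0" using mh_nz[OF sfK rhop_mh] .
lemma rho'p_nz: "x \<in> K \<Longrightarrow> x \<noteq> 0 \<Longrightarrow> (rho' ^^ n) x \<noteq> 0" using mh_nz[OF sfK rho'p_mh] .

lemma rho_p_pth: "x \<in> K \<Longrightarrow> x \<noteq> 0 \<Longrightarrow> pth ((rho ^^ p) x)"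
proof -
  assume x: "x \<in> K" "x \<noteq> 0"
  have e: "(rho ^^ p) x = (inverse (\<Prod>l\<in>{1..<p}. ((rho ^^ l) x) ^ ((p choose l) div p))) ^ p"
    using top_rel_pth[OF sig_fhom sig_K sig_p x] unfolding rho_def[abs_def] by simp
  have "(\<Prod>l\<in>{1..<p}. ((rho ^^ l) x) ^ ((p choose l) div p)) \<in> K"
    by (intro sf_prod[OF sfK] sf_power[OF sfK] rhop_in x)
  moreover have "(\<Prod>l\<in>{1..<p}. ((rho ^^ l) x) ^ ((p choose l) div p)) \<noteq> 0"
    using rhop_nz[OF x] by simp
  ultimately show ?thesis unfolding e by (intro pth_powI) (auto intro: sf_inverse[OF sfK])
qed

definition i :: nat where "i = mod_length p K \<sigma> \<gamma>"

lemma i_def': "i = (LEAST n. pth ((rho ^^ n) \<gamma>))"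
  unfolding i_def mod_length_def rho_iter_eq ..

lemma i_le_p: "i \<le> p"
  unfolding i_def' by (rule Least_le) (rule rho_p_pth[OF gK g0])

lemma pth_i: "pth ((rho ^^ i) \<gamma>)"
  unfolding i_def' by (rule LeastI) (rule rho_p_pth[OF gK g0])

lemma not_pth_lt: "n < i \<Longrightarrow> \<not> pth ((rho ^^ n) \<gamma>)"
  unfolding i_def' by (rule not_less_Least)

lemma pth_ge: "i \<le> n \<Longrightarrow> pth ((rho ^^ n) \<gamma>)"
proof -
  assume "i \<le> n"
  then have "(rho ^^ n) \<gamma> = (rho ^^ (n - i)) ((rho ^^ i) \<gamma>)"
    by (simp add: funpow_apply_add)
  then show ?thesis using pth_mh[OF rhop_mh pth_i] by simp
qed

lemma pth_rho_iff: "pth ((rho ^^ n) \<gamma>) \<longleftrightarrow> i \<le> n"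
  using pth_ge not_pth_lt by (meson not_le)

lemma sig_sig'p: "\<sigma> ((sig' ^^ n) y) = (sig' ^^ n) (\<sigma> y)"
  unfolding sig'_pow by (metis funpow_swap1)

lemma rho_sig'p: "y \<in> K \<Longrightarrow> rho ((sig' ^^ n) y) = (sig' ^^ n) (rho y)"
  unfolding rho_def sig_sig'p
  using fh_divide[OF sfK, of "sig' ^^ n"] sig'p_mh sig_K
  by (metis fhom_funpow[OF sfK sig'_fhom] image_subset_iff sig'_K)

lemma rho'_eq: "y \<in> K \<Longrightarrow> rho' y = inverse (sig' (rho y))"
proof -
  assume y: "y \<in> K"
  have "sig' (\<sigma> y) = (\<sigma> ^^ p) y" unfolding sig'_def using p0
    by (metis Suc_diff_1 funpow_Suc_right o_apply)
  then have "sig' (\<sigma> y) = y" using sig_p y by simp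
  have "sig' (rho y) = sig' (\<sigma> y) / sig' y" unfolding rho_def
    by (rule fh_divide[OF sfK sig'_fhom sig_K[OF y] y])
  then have "sig' (rho y) = y / sig' y" using \<open>sig' (\<sigma> y) = y\<close> by simp
  then show ?thesis unfolding rho'_def by simp
qed

lemma rho'_rho:
  "x \<in> K \<Longrightarrow> (rho' ^^ n) x = (if even n then (sig' ^^ n) ((rho ^^ n) x) else inverse ((sig' ^^ n) ((rho ^^ n) x)))"
proof (induction n)
  case 0 then show ?case by simp
next
  case (Suc n)
  have rK: "(rho ^^ n) x \<in> K" using rhop_in Suc.prems by blast
  have sK: "(sig' ^^ n) ((rho ^^ n) x) \<in> K" using sig'p_K rK by blast
  have "(rho' ^^ Suc n) x = rho' ((rho' ^^ n) x)" by simp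
  also have "\<dots> = inverse (sig' (rho ((rho' ^^ n) x)))" using rho'_eq rho'p_in Suc.prems by blast
  also have "\<dots> = (if even (Suc n) then (sig' ^^ Suc n) ((rho ^^ Suc n) x) else inverse ((sig' ^^ Suc n) ((rho ^^ Suc n) x)))"
  proof (cases "even n")
    case True
    then have "(rho' ^^ n) x = (sig' ^^ n) ((rho ^^ n) x)" using Suc by simp
    then show ?thesis using True rho_sig'p[OF rK, of n] by (simp add: funpow_swap1)
  next
    case False
    then have "(rho' ^^ n) x = inverse ((sig' ^^ n) ((rho ^^ n) x))" using Suc by simp
    then have "rho ((rho' ^^ n) x) = inverse ((sig' ^^ n) ((rho ^^ Suc n) x))"
      using mh_inverse[OF sfK rho_mh sK] rho_sig'p[OF rK, of n] by simp
    moreover have "(rho ^^ Suc n) x \<in> K" using rhop_in Suc.prems by blast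
    ultimately have "sig' (rho ((rho' ^^ n) x)) = inverse ((sig' ^^ Suc n) ((rho ^^ Suc n) x))"
      using mh_inverse[OF sfK sig'p_mh[of 1]] sig'p_K by (simp add: funpow_swap1)
    then show ?thesis using False by simp
  qed
  finally show ?case .
qed

lemma pth_sig'p_iff: "y \<in> K \<Longrightarrow> pth ((sig' ^^ n) y) \<longleftrightarrow> pth y"
proof
  assume y: "y \<in> K" and h: "pth ((sig' ^^ n) y)"
  have e: "n + (p - 1) * n = p * n" using p0 by (cases p) auto
  have "(\<sigma> ^^ n) ((sig' ^^ n) y) = (\<sigma> ^^ (p * n)) y"
    unfolding sig'_pow by (simp only: funpow_apply_add e)
  also have "\<dots> = y" using sig_pq y by simp
  finally show "pth y" using pth_mh[OF sigp_mh h] by metis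
next
  assume "pth y" then show "pth ((sig' ^^ n) y)" using pth_mh[OF sig'p_mh] by blast
qed

lemma pth_inverse_iff: "pth (inverse y) \<longleftrightarrow> pth y"
  using pth_inverse by fastforce

definition gp :: "nat \<Rightarrow> 'a" where "gp l = (rho' ^^ l) \<gamma>"

lemma gp_K: "gp l \<in> K" unfolding gp_def using rho'p_in gK by blast
lemma gp_nz: "gp l \<noteq> 0" unfolding gp_def using rho'p_nz gK g0 by blast

lemma pth_gp_iff: "pth (gp l) \<longleftrightarrow> i \<le> l"
proof -
  have "pth (gp l) \<longleftrightarrow> pth ((sig' ^^ l) ((rho ^^ l) \<gamma>))"
    unfolding gp_def rho'_rho[OF gK] by (simp add: pth_inverse_iff)
  also have "\<dots> \<longleftrightarrow> pth ((rho ^^ l) \<gamma>)" using pth_sig'p_iff rhop_in gK by blast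
  finally show ?thesis using pth_rho_iff by simp
qed

lemma gp_Suc: "gp (Suc l) = rho' (gp l)" unfolding gp_def by simp

end


lemma fg_fg: "field_gen (field_gen S \<union> T) = field_gen (S \<union> T)"
proof
  show "field_gen (field_gen S \<union> T) \<subseteq> field_gen (S \<union> T)"
    by (rule field_gen_least[OF field_gen_subfield])
       (use field_gen_mono[of S "S \<union> T"] field_gen_sub[of "S \<union> T"] in auto)
  show "field_gen (S \<union> T) \<subseteq> field_gen (field_gen S \<union> T)"
    by (rule field_gen_mono) (use field_gen_sub[of S] in auto)
qed

lemma field_gen_self: "is_subfield K \<Longrightarrow> field_gen K = K"
  using field_gen_least[of K K] field_gen_sub[of K] by auto

context msetup
begin

lemma pth_1: "pth 1" using pth_powI[OF sf_1[OF sfK]] by simp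

lemma pth_power: "pth x \<Longrightarrow> pth (x ^ n)"
  by (induction n) (auto simp: pth_1 pth_mult)

lemma pth_prod: "(\<And>l. l \<in> A \<Longrightarrow> pth (f l)) \<Longrightarrow> pth (prod f A)"
  by (induction A rule: infinite_finite_induct) (auto simp: pth_1 pth_mult)

lemma sig'_p: "x \<in> K \<Longrightarrow> (sig' ^^ p) x = x"
  unfolding sig'_pow using sig_pq[of x "p - 1"] by (simp add: mult.commute)

lemma rho'_lam: "rho' = (\<lambda>y. sig' y / y)" by (simp add: fun_eq_iff rho'_def)

definition c0 :: 'a where
  "c0 = (if i = p then inverse (\<Prod>l\<in>{1..<p}. gp l ^ ((p choose l) div p))
         else (SOME c. c \<in> K \<and> c \<noteq> 0 \<and> c ^ p = gp i))"

lemma c0: "c0 \<in> K \<and> c0 \<noteq> 0 \<and> c0 ^ p = gp i"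
proof (cases "i = p")
  case True
  have e: "gp p = (inverse (\<Prod>l\<in>{1..<p}. gp l ^ ((p choose l) div p))) ^ p"
    using top_rel_pth[OF sig'_fhom sig'_K sig'_p gK g0] unfolding gp_def rho'_lam by simp
  have "(\<Prod>l\<in>{1..<p}. gp l ^ ((p choose l) div p)) \<in> K"
    by (intro sf_prod[OF sfK] sf_power[OF sfK] gp_K)
  moreover have "(\<Prod>l\<in>{1..<p}. gp l ^ ((p choose l) div p)) \<noteq> 0" using gp_nz by simp
  ultimately show ?thesis using True e unfolding c0_def by (auto intro: sf_inverse[OF sfK])
next
  case False
  have "pth (gp i)" using pth_gp_iff by simp
  then have "\<exists>c. c \<in> K \<and> c \<noteq> 0 \<and> c ^ p = gp i" unfolding pth_power_in_def by auto
  moreover have "c0 = (SOME c. c \<in> K \<and> c \<noteq> 0 \<and> c ^ p = gp i)" using False unfolding c0_def by simp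
  ultimately show ?thesis using someI_ex[of "\<lambda>c. c \<in> K \<and> c \<noteq> 0 \<and> c ^ p = gp i"] by simp
qed

definition bt :: "nat \<Rightarrow> 'a" where
  "bt l = (if l < i then (SOME y. y ^ p = gp l) else (rho' ^^ (l - i)) c0)"

lemma bt_p: "bt l ^ p = gp l"
proof (cases "l < i")
  case True
  have "\<exists>y. y ^ p = gp l" using roots gp_K by blast
  moreover have "bt l = (SOME y. y ^ p = gp l)" using True unfolding bt_def by simp
  ultimately show ?thesis using someI_ex[of "\<lambda>y. y ^ p = gp l"] by simp
next
  case False
  have "(rho' ^^ (l - i)) (c0 ^ p) = ((rho' ^^ (l - i)) c0) ^ p"
    using c0 mh_power[OF sfK rho'p_mh, of c0 "l - i" p] by simp
  then have "bt l ^ p = (rho' ^^ (l - i)) (c0 ^ p)"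
    using False unfolding bt_def by simp
  also have "\<dots> = gp l" using c0 False unfolding gp_def by (simp add: funpow_apply_add)
  finally show ?thesis .
qed

lemma bt_nz: "bt l \<noteq> 0" using bt_p gp_nz p0 by (metis zero_power)

lemma bt_K: "i \<le> l \<Longrightarrow> bt l \<in> K"
  unfolding bt_def using rho'p_in c0 by auto

lemma bt_rho': "i \<le> l \<Longrightarrow> rho' (bt l) = bt (Suc l)"
  unfolding bt_def by (simp add: Suc_diff_le)

lemma bt_i: "bt i = c0" unfolding bt_def by simp

lemma indepM:
  assumes j: "j < i"
  shows "\<not> (\<exists>d\<in>K. d \<noteq> 0 \<and> (\<exists>m. gp j = d ^ p * (\<Prod>l\<in>{Suc j..<i}. gp l ^ m l)))"
proof
  assume "\<exists>d\<in>K. d \<noteq> 0 \<and> (\<exists>m. gp j = d ^ p * (\<Prod>l\<in>{Suc j..<i}. gp l ^ m l))"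
  then obtain d m where d: "d \<in> K" "d \<noteq> 0" and eq: "gp j = d ^ p * (\<Prod>l\<in>{Suc j..<i}. gp l ^ m l)" by blast
  define r where "r = i - 1 - j"
  have "pth (d ^ p * (\<Prod>l\<in>{Suc j..<i}. gp l ^ m l)) \<Longrightarrow> True" by simp
  have m1: "mh K (rho' ^^ r)" by (rule rho'p_mh)
  have "(rho' ^^ r) (gp j) = gp (i - 1)" unfolding gp_def r_def using j by (simp add: funpow_apply_add)
  also have "(rho' ^^ r) (gp j) = (rho' ^^ r) (d ^ p) * (\<Prod>l\<in>{Suc j..<i}. (rho' ^^ r) (gp l ^ m l))"
    unfolding eq using d gp_K
    by (simp add: mh_mult[OF sfK m1] mh_prod[OF sfK m1] sf_power[OF sfK] sf_prod[OF sfK])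
  finally have e2: "gp (i - 1) = (rho' ^^ r) (d ^ p) * (\<Prod>l\<in>{Suc j..<i}. (rho' ^^ r) (gp l ^ m l))" ..
  have "pth ((rho' ^^ r) (d ^ p))" by (rule pth_mh[OF m1 pth_powI[OF d]])
  moreover have "pth ((rho' ^^ r) (gp l ^ m l))" if "l \<in> {Suc j..<i}" for l
  proof -
    have "(rho' ^^ r) (gp l ^ m l) = gp (r + l) ^ m l"
      using mh_power[OF sfK m1 gp_K] unfolding gp_def by (simp add: funpow_apply_add)
    moreover have "i \<le> r + l" using that j unfolding r_def by auto
    ultimately show ?thesis using pth_power pth_gp_iff by simp
  qed
  ultimately have "pth (gp (i - 1))" unfolding e2 by (intro pth_mult pth_prod) auto
  then show False using pth_gp_iff j by simp
qed

subsection \<open>The tower\<close>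

primrec Et :: "nat \<Rightarrow> 'a set" where
  "Et 0 = K"
| "Et (Suc t) = adj (Et t) (bt (i - 1 - t))"

definition Inv :: "nat \<Rightarrow> bool" where
  "Inv t \<longleftrightarrow> is_subfield (Et t) \<and> K \<subseteq> Et t \<and> Et t = field_gen (K \<union> bt ` {i - t..<i})
     \<and> (\<forall>w\<in>K. w \<noteq> 0 \<longrightarrow> (\<exists>y\<in>Et t. y ^ p = w) \<longrightarrow>
          (\<exists>d\<in>K. d \<noteq> 0 \<and> (\<exists>m. w = d ^ p * (\<Prod>l\<in>{i - t..<i}. gp l ^ m l))))"

lemma Inv_kstep:
  assumes I: "Inv t" and t: "t < i"
  shows "kstep p \<xi> (Et t) (gp (i - 1 - t)) (bt (i - 1 - t))"
proof -
  have sf: "is_subfield (Et t)" and KE: "K \<subseteq> Et t" using I unfolding Inv_def by auto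
  have np: "\<not> (\<exists>y\<in>Et t. y ^ p = gp (i - 1 - t))"
  proof
    assume "\<exists>y\<in>Et t. y ^ p = gp (i - 1 - t)"
    then obtain d m where "d \<in> K" "d \<noteq> 0" "gp (i - 1 - t) = d ^ p * (\<Prod>l\<in>{i - t..<i}. gp l ^ m l)"
      using I gp_K gp_nz unfolding Inv_def by blast
    moreover have "i - t = Suc (i - 1 - t)" using t by simp
    ultimately show False using indepM[of "i - 1 - t"] t by auto
  qed
  show ?thesis
    by (unfold_locales) (use pp xp x1 sf KE xiK gp_K bt_p np in auto)
qed

lemma Inv_all: "t \<le> i \<Longrightarrow> Inv t"
proof (induction t)
  case 0
  have "Et 0 = field_gen (K \<union> bt ` {i - 0..<i})" using field_gen_self[OF sfK] by simp
  moreover have "\<forall>w\<in>K. w \<noteq> 0 \<longrightarrow> (\<exists>y\<in>Et 0. y ^ p = w) \<longrightarrow>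
          (\<exists>d\<in>K. d \<noteq> 0 \<and> (\<exists>m. w = d ^ p * (\<Prod>l\<in>{i - 0..<i}. gp l ^ m l)))"
    using p0 by (auto simp: zero_power)
  ultimately show ?case unfolding Inv_def using sfK by simp
next
  case (Suc t)
  then have I: "Inv t" and t: "t < i" by auto
  define j where "j = i - 1 - t"
  interpret ks: kstep p \<xi> "Et t" "gp j" "bt j" using Inv_kstep[OF I t] unfolding j_def .
  have EtS: "Et (Suc t) = adj (Et t) (bt j)" unfolding j_def by simp
  have sf: "is_subfield (Et (Suc t))" unfolding EtS by (rule ks.A_subfield)
  have KE: "K \<subseteq> Et (Suc t)" using I ks.E_sub_A unfolding Inv_def EtS by blast
  have iv: "{i - Suc t..<i} = insert j {i - t..<i}" using t unfolding j_def by auto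
  have jn: "j \<notin> {i - t..<i}" unfolding j_def using t by auto
  have jlt: "j < i - t" unfolding j_def using t by auto
  have fg: "Et (Suc t) = field_gen (K \<union> bt ` {i - Suc t..<i})"
  proof -
    have "Et (Suc t) = field_gen (Et t \<union> {bt j})" unfolding EtS by (rule ks.A_field_gen)
    also have "\<dots> = field_gen (field_gen (K \<union> bt ` {i - t..<i}) \<union> {bt j})" using I unfolding Inv_def by simp
    also have "\<dots> = field_gen (K \<union> bt ` {i - t..<i} \<union> {bt j})" by (rule fg_fg)
    also have "K \<union> bt ` {i - t..<i} \<union> {bt j} = K \<union> bt ` {i - Suc t..<i}" unfolding iv by auto
    finally show ?thesis .
  qed
  have kp: "\<forall>w\<in>K. w \<noteq> 0 \<longrightarrow> (\<exists>y\<in>Et (Suc t). y ^ p = w) \<longrightarrow>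
          (\<exists>d\<in>K. d \<noteq> 0 \<and> (\<exists>m. w = d ^ p * (\<Prod>l\<in>{i - Suc t..<i}. gp l ^ m l)))"
  proof (intro ballI impI)
    fix w assume w: "w \<in> K" "w \<noteq> 0" and "\<exists>y\<in>Et (Suc t). y ^ p = w"
    then obtain y where y: "y \<in> adj (Et t) (bt j)" "y ^ p = w" unfolding EtS by blast
    have "y ^ p \<in> Et t" using y(2) w(1) I unfolding Inv_def by auto
    then obtain c k where ck: "c \<in> Et t" "k < p" "y = c * bt j ^ k" using ks.kummer[OF y(1)] by blast
    have c0': "c \<noteq> 0" using ck y w p0 by auto
    have cp: "c ^ p = w / gp j ^ k"
    proof -
      have "w = c ^ p * (bt j ^ p) ^ k" using y(2) ck(3) by (simp add: power_mult_distrib power_mult[symmetric] mult.commute[of k p])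
      then show ?thesis using bt_p gp_nz by (simp add: field_simps)
    qed
    have wK: "w / gp j ^ k \<in> K" using w gp_K sf_divide[OF sfK] sf_power[OF sfK] by blast
    have wnz: "w / gp j ^ k \<noteq> 0" using w gp_nz by simp
    have kpI: "\<forall>w\<in>K. w \<noteq> 0 \<longrightarrow> (\<exists>y\<in>Et t. y ^ p = w) \<longrightarrow>
          (\<exists>d\<in>K. d \<noteq> 0 \<and> (\<exists>m. w = d ^ p * (\<Prod>l\<in>{i - t..<i}. gp l ^ m l)))"
      using I unfolding Inv_def by blast
    have ex: "\<exists>y\<in>Et t. y ^ p = w / gp j ^ k" using ck(1) cp by blast
    obtain d m where dm: "d \<in> K" "d \<noteq> 0" "w / gp j ^ k = d ^ p * (\<Prod>l\<in>{i - t..<i}. gp l ^ m l)"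
      using kpI[rule_format, OF wK wnz ex] by blast
    define m' where "m' = m(j := k)"
    have "(\<Prod>l\<in>insert j {i - t..<i}. gp l ^ m' l) = gp j ^ m' j * (\<Prod>l\<in>{i - t..<i}. gp l ^ m' l)"
      by (rule prod.insert[OF _ jn]) simp
    moreover have "(\<Prod>l\<in>{i - t..<i}. gp l ^ m' l) = (\<Prod>l\<in>{i - t..<i}. gp l ^ m l)"
      by (rule prod.cong) (use jlt in \<open>auto simp: m'_def\<close>)
    ultimately have "(\<Prod>l\<in>{i - Suc t..<i}. gp l ^ m' l) = gp j ^ k * (\<Prod>l\<in>{i - t..<i}. gp l ^ m l)"
      unfolding iv by (simp add: m'_def)
    then have "w = d ^ p * (\<Prod>l\<in>{i - Suc t..<i}. gp l ^ m' l)"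
      using dm(3) gp_nz by (simp add: field_simps)
    then show "\<exists>d\<in>K. d \<noteq> 0 \<and> (\<exists>m. w = d ^ p * (\<Prod>l\<in>{i - Suc t..<i}. gp l ^ m l))"
      using dm by blast
  qed
  show ?case unfolding Inv_def using sf KE fg kp by blast
qed

definition L :: "'a set" where "L = Et i"

lemma L_sub: "is_subfield L" and KL: "K \<subseteq> L" and L_fg: "L = field_gen (K \<union> bt ` {..<i})"
  using Inv_all[of i] unfolding Inv_def L_def by (auto simp: atLeast0LessThan)

lemma bt_L: "bt l \<in> L"
proof (cases "l < i")
  case True
  then have "bt l \<in> K \<union> bt ` {..<i}" by auto
  then show ?thesis using L_fg field_gen_sub[of "K \<union> bt ` {..<i}"] by auto
next
  case False then show ?thesis using bt_K KL by auto
qed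

lemma xiL: "\<xi> \<in> L" using KL xiK by auto

end


context msetup
begin

abbreviation Ms :: "'a set" where "Ms \<equiv> Mset p K \<sigma> \<gamma>"

lemma sgK: "(\<sigma> ^^ k) \<gamma> \<in> K" using sigp_K gK by blast
lemma sgnz: "(\<sigma> ^^ k) \<gamma> \<noteq> 0" using fh_eq_0_iff[OF sfK sigp_fhom gK] g0 by blast

lemma ms_intro: "b \<in> K \<Longrightarrow> b \<noteq> 0 \<Longrightarrow> (\<Prod>k<p. ((\<sigma> ^^ k) \<gamma>) ^ n k) * b ^ p \<in> Ms"
  unfolding Mset_def by blast

lemma ms_elim:
  assumes "x \<in> Ms"
  obtains n b where "b \<in> K" "b \<noteq> 0" "x = (\<Prod>k<p. ((\<sigma> ^^ k) \<gamma>) ^ n k) * b ^ p"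
  using assms unfolding Mset_def by blast

lemma ms_K: "x \<in> Ms \<Longrightarrow> x \<in> K \<and> x \<noteq> 0"
proof -
  assume "x \<in> Ms"
  then obtain n b where b: "b \<in> K" "b \<noteq> 0" and x: "x = (\<Prod>k<p. ((\<sigma> ^^ k) \<gamma>) ^ n k) * b ^ p"
    by (rule ms_elim)
  have "(\<Prod>k<p. ((\<sigma> ^^ k) \<gamma>) ^ n k) \<in> K" by (intro sf_prod[OF sfK] sf_power[OF sfK] sgK)
  then have "x \<in> K" unfolding x using sf_mult[OF sfK] sf_power[OF sfK b(1)] by blast
  moreover have "(\<Prod>k<p. ((\<sigma> ^^ k) \<gamma>) ^ n k) \<noteq> 0" using sgnz by simp
  then have "x \<noteq> 0" unfolding x using b(2) by simp
  ultimately show ?thesis by simp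
qed

lemma ms_gamma: "\<gamma> \<in> Ms"
proof -
  obtain m where m: "p = Suc m" using p0 by (cases p) auto
  have "(\<Prod>k<p. ((\<sigma> ^^ k) \<gamma>) ^ (if k = 0 then 1 else 0)) = \<gamma>"
    unfolding m by (subst prod.lessThan_Suc_shift) simp
  then show ?thesis using ms_intro[OF sf_1[OF sfK], of "\<lambda>k. if k = 0 then 1 else 0"] by simp
qed

lemma ms_mult: "x \<in> Ms \<Longrightarrow> y \<in> Ms \<Longrightarrow> x * y \<in> Ms"
proof -
  assume x: "x \<in> Ms" and y: "y \<in> Ms"
  obtain n1 b1 where 1: "b1 \<in> K" "b1 \<noteq> 0" "x = (\<Prod>k<p. ((\<sigma> ^^ k) \<gamma>) ^ n1 k) * b1 ^ p"
    using x by (rule ms_elim)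
  obtain n2 b2 where 2: "b2 \<in> K" "b2 \<noteq> 0" "y = (\<Prod>k<p. ((\<sigma> ^^ k) \<gamma>) ^ n2 k) * b2 ^ p"
    using y by (rule ms_elim)
  have "x * y = (\<Prod>k<p. ((\<sigma> ^^ k) \<gamma>) ^ (n1 k + n2 k)) * (b1 * b2) ^ p"
    unfolding 1 2 by (simp add: power_add prod.distrib power_mult_distrib mult_ac)
  then show ?thesis using ms_intro[of "b1 * b2"] 1 2 sf_mult[OF sfK] by simp
qed

lemma ms_pmult: "x \<in> Ms \<Longrightarrow> b \<in> K \<Longrightarrow> b \<noteq> 0 \<Longrightarrow> x * b ^ p \<in> Ms"
proof -
  assume x: "x \<in> Ms" and b: "b \<in> K" "b \<noteq> 0"
  obtain n b1 where 1: "b1 \<in> K" "b1 \<noteq> 0" "x = (\<Prod>k<p. ((\<sigma> ^^ k) \<gamma>) ^ n k) * b1 ^ p"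
    using x by (rule ms_elim)
  have eq: "x * b ^ p = (\<Prod>k<p. ((\<sigma> ^^ k) \<gamma>) ^ n k) * (b1 * b) ^ p"
    unfolding 1 by (simp add: power_mult_distrib mult_ac)
  have "(\<Prod>k<p. ((\<sigma> ^^ k) \<gamma>) ^ n k) * (b1 * b) ^ p \<in> Ms"
    by (rule ms_intro) (use sf_mult[OF sfK 1(1) b(1)] 1(2) b(2) in auto)
  then show ?thesis unfolding eq .
qed

lemma ms_sig: "x \<in> Ms \<Longrightarrow> \<sigma> x \<in> Ms"
proof -
  assume "x \<in> Ms"
  then obtain n b where b: "b \<in> K" "b \<noteq> 0" and x: "x = (\<Prod>k<p. ((\<sigma> ^^ k) \<gamma>) ^ n k) * b ^ p"
    by (rule ms_elim)
  obtain m where m: "p = Suc m" using p0 by (cases p) auto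
  have "\<sigma> x = (\<Prod>k<p. (\<sigma> ((\<sigma> ^^ k) \<gamma>)) ^ n k) * (\<sigma> b) ^ p"
    unfolding x using b sgK
    by (simp add: fh_mult[OF sfK sig_fhom] fh_prod[OF sfK sig_fhom] fh_power[OF sfK sig_fhom]
        sf_prod[OF sfK] sf_power[OF sfK])
  also have "(\<Prod>k<p. (\<sigma> ((\<sigma> ^^ k) \<gamma>)) ^ n k) = (\<Prod>k<p. ((\<sigma> ^^ k) \<gamma>) ^ (if k = 0 then n m else n (k - 1)))"
  proof -
    have "(\<Prod>k<p. (\<sigma> ((\<sigma> ^^ k) \<gamma>)) ^ n k) = (\<Prod>k<m. ((\<sigma> ^^ Suc k) \<gamma>) ^ n k) * ((\<sigma> ^^ p) \<gamma>) ^ n m"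
      unfolding m by (simp add: prod.lessThan_Suc)
    also have "(\<sigma> ^^ p) \<gamma> = \<gamma>" using sig_p gK by simp
    also have "(\<Prod>k<m. ((\<sigma> ^^ Suc k) \<gamma>) ^ n k) * \<gamma> ^ n m
        = (\<Prod>k<Suc m. ((\<sigma> ^^ k) \<gamma>) ^ (if k = 0 then n m else n (k - 1)))"
      by (subst prod.lessThan_Suc_shift) (simp add: mult.commute)
    finally show ?thesis unfolding m .
  qed
  finally show ?thesis using ms_intro[of "\<sigma> b"] sig_K[OF b(1)] fh_eq_0_iff[OF sfK sig_fhom b(1)] b(2) by simp
qed

lemma ms_sigp: "x \<in> Ms \<Longrightarrow> (\<sigma> ^^ n) x \<in> Ms"
  by (induction n) (auto intro: ms_sig)

lemma ms_pow: "x \<in> Ms \<Longrightarrow> x ^ Suc n \<in> Ms"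
  by (induction n) (auto intro: ms_mult)

lemma ms_inv: "x \<in> Ms \<Longrightarrow> inverse x \<in> Ms"
proof -
  assume x: "x \<in> Ms"
  obtain m where m: "p = Suc (Suc m)" using p1 by (cases p; cases "p - 1") auto
  have xK: "x \<in> K" "x \<noteq> 0" using ms_K x by auto
  have e: "inverse x = x ^ Suc m * (inverse x) ^ p"
    using xK(2) unfolding m by (simp add: field_simps)
  have "x ^ Suc m * (inverse x) ^ p \<in> Ms"
    by (rule ms_pmult[OF ms_pow[OF x] sf_inverse[OF sfK xK(1)]]) (simp add: xK(2))
  then show ?thesis by (simp only: e[symmetric])
qed

lemma ms_rho': "x \<in> Ms \<Longrightarrow> rho' x \<in> Ms"
  unfolding rho'_def sig'_def divide_inverse by (intro ms_mult ms_sigp ms_inv)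

lemma ms_gp: "gp l \<in> Ms"
  by (induction l) (auto simp: gp_def ms_gamma ms_rho')

lemma pm1_sq: "(p - 1) * (p - 1) = p * (p - 2) + 1"
  using p1 by (cases p; cases "p - 1") (auto simp: algebra_simps)

lemma sig_as_sig': "k < p \<Longrightarrow> (\<sigma> ^^ k) \<gamma> = (sig' ^^ ((p - 1) * k)) \<gamma>"
proof -
  assume k: "k < p"
  have "(sig' ^^ ((p - 1) * k)) \<gamma> = (\<sigma> ^^ ((p - 1) * ((p - 1) * k))) \<gamma>" unfolding sig'_pow ..
  also have "\<dots> = (\<sigma> ^^ (((p - 1) * ((p - 1) * k)) mod p)) \<gamma>" using sig_mod gK by blast
  also have "((p - 1) * ((p - 1) * k)) mod p = k"
  proof -
    have "(p - 1) * ((p - 1) * k) = k + p * ((p - 2) * k)" using pm1_sq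
      by (metis (no_types, lifting) add.commute mult.assoc mult_Suc Suc_eq_plus1 add.left_commute)
    then show ?thesis using k by simp
  qed
  finally show ?thesis by simp
qed

lemma LM_eq: "L_M p K \<sigma> \<gamma> = L"
proof -
  define Y where "Y = {y. y ^ p \<in> Ms}"
  have LM: "L_M p K \<sigma> \<gamma> = field_gen (K \<union> Y)" unfolding L_M_def Y_def ..
  have btY: "bt ` {..<i} \<subseteq> Y" unfolding Y_def using bt_p ms_gp by auto
  have YL: "Y \<subseteq> L"
  proof
    fix y assume "y \<in> Y"
    then have "y ^ p \<in> Ms" unfolding Y_def by simp
    then obtain n b where b: "b \<in> K" "b \<noteq> 0" and yp: "y ^ p = (\<Prod>k<p. ((\<sigma> ^^ k) \<gamma>) ^ n k) * b ^ p"
      by (rule ms_elim)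
    define z where "z = (\<lambda>k. \<Prod>l\<le>(p - 1) * k. bt l ^ ((p - 1) * k choose l))"
    have zL: "z k \<in> L" for k unfolding z_def by (intro sf_prod[OF L_sub] sf_power[OF L_sub] bt_L)
    have sz: "(\<sigma> ^^ k) \<gamma> = z k ^ p" if "k < p" for k
    proof -
      have "(\<sigma> ^^ k) \<gamma> = (\<Prod>l\<le>(p - 1) * k. gp l ^ ((p - 1) * k choose l))"
        unfolding sig_as_sig'[OF that] sig'_binom[OF gK g0] gp_def ..
      also have "\<dots> = z k ^ p" unfolding z_def
        by (simp add: bt_p[symmetric] prod_power_distrib power_mult[symmetric] mult.commute)
      finally show ?thesis .
    qed
    define Z where "Z = (\<Prod>k<p. z k ^ n k) * b"
    have ZL: "Z \<in> L" unfolding Z_def using zL KL b(1) by (intro sf_mult[OF L_sub] sf_prod[OF L_sub] sf_power[OF L_sub]) auto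
    have yZ: "y ^ p = Z ^ p"
    proof -
      have "y ^ p = (\<Prod>k<p. (z k ^ p) ^ n k) * b ^ p" unfolding yp using sz by simp
      also have "\<dots> = Z ^ p" unfolding Z_def
        by (simp add: power_mult_distrib prod_power_distrib power_mult[symmetric] mult.commute)
      finally show ?thesis .
    qed
    have "y ^ p \<noteq> 0" using \<open>y ^ p \<in> Ms\<close> ms_K by blast
    then have Z0: "Z \<noteq> 0" using yZ p0 by (auto simp: zero_power)
    then have "(y / Z) ^ p = 1" using yZ by (simp add: power_divide)
    then obtain s where "y / Z = \<xi> ^ s" using root_of_unity[OF pp xp x1] by blast
    then have "y = \<xi> ^ s * Z" using Z0 by (simp add: field_simps)
    then show "y \<in> L" using sf_mult[OF L_sub sf_power[OF L_sub xiL] ZL] by simp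
  qed
  show ?thesis
  proof
    show "L_M p K \<sigma> \<gamma> \<subseteq> L" unfolding LM by (rule field_gen_least[OF L_sub]) (use KL YL in auto)
    show "L \<subseteq> L_M p K \<sigma> \<gamma>" unfolding LM L_fg by (rule field_gen_mono) (use btY in auto)
  qed
qed

subsection \<open>The norm and the index\<close>

abbreviation NN :: 'a where "NN \<equiv> norm_KF p \<sigma> \<gamma>"

lemma NN_K: "NN \<in> K" unfolding norm_KF_def by (intro sf_prod[OF sfK] sgK)

lemma sig_NN: "\<sigma> NN = NN"
proof -
  obtain m where m: "p = Suc m" using p0 by (cases p) auto
  have "\<sigma> NN = (\<Prod>k<p. (\<sigma> ^^ Suc k) \<gamma>)"
    unfolding norm_KF_def using sgK by (simp add: fh_prod[OF sfK sig_fhom])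
  also have "\<dots> = (\<Prod>k<m. (\<sigma> ^^ Suc k) \<gamma>) * (\<sigma> ^^ p) \<gamma>" unfolding m by (rule prod.lessThan_Suc)
  also have "(\<sigma> ^^ p) \<gamma> = \<gamma>" using sig_p gK by simp
  also have "(\<Prod>k<m. (\<sigma> ^^ Suc k) \<gamma>) * \<gamma> = NN"
    unfolding norm_KF_def m by (subst prod.lessThan_Suc_shift) (simp add: mult.commute)
  finally show ?thesis .
qed

lemma NN_pth: assumes ip: "i < p" shows "pth NN"
proof -
  define f where "f = (\<lambda>l. (rho ^^ l) \<gamma>)"
  have "NN = (\<Prod>k<p. \<Prod>l<p. f l ^ (k choose l))"
    unfolding norm_KF_def
  proof (intro prod.cong refl)
    fix k assume "k \<in> {..<p}"
    then have k: "k < p" by simp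
    have "(\<sigma> ^^ k) \<gamma> = (\<Prod>l\<le>k. f l ^ (k choose l))" unfolding f_def by (rule sig_binom[OF gK g0])
    also have "\<dots> = (\<Prod>l<p. f l ^ (k choose l))"
      by (rule prod.mono_neutral_left) (use k in \<open>auto simp: binomial_eq_0\<close>)
    finally show "(\<sigma> ^^ k) \<gamma> = (\<Prod>l<p. f l ^ (k choose l))" .
  qed
  also have "\<dots> = (\<Prod>l<p. \<Prod>k<p. f l ^ (k choose l))" by (rule prod.swap)
  also have "\<dots> = (\<Prod>l<p. f l ^ (p choose Suc l))"
  proof (intro prod.cong refl)
    fix l
    have "(\<Sum>k<p. k choose l) = (\<Sum>k\<le>p - 1. k choose l)"
      using p0 by (intro sum.cong) auto
    also have "\<dots> = p choose Suc l" using sum_choose_upper[where n="p - 1" and m=l] p0 by simp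
    finally show "(\<Prod>k<p. f l ^ (k choose l)) = f l ^ (p choose Suc l)"
      by (simp add: power_sum[symmetric])
  qed
  finally have N: "NN = (\<Prod>l<p. f l ^ (p choose Suc l))" .
  have "pth (f l ^ (p choose Suc l))" if "l < p" for l
  proof (cases "Suc l < p")
    case True
    have "f l ^ (p choose Suc l) = (f l ^ ((p choose Suc l) div p)) ^ p"
      using choose_div[of "Suc l"] True by (metis power_mult mult.commute zero_less_Suc)
    moreover have "f l \<in> K" "f l \<noteq> 0" unfolding f_def using rhop_in rhop_nz gK g0 by auto
    ultimately show ?thesis using pth_powI sf_power[OF sfK] by (metis power_not_zero)
  next
    case False
    then have "l = p - 1" using that by simp
    then have "pth (f l)" unfolding f_def using pth_ge ip by simp
    then show ?thesis using False that by (simp add: \<open>l = p - 1\<close>)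
  qed
  then show ?thesis unfolding N by (intro pth_prod) auto
qed

lemma kidx:
  assumes ip: "i < p"
  shows "kummer_index p \<xi> K \<sigma> \<gamma> < p \<and>
    (\<exists>\<delta>\<in>K. \<delta> \<noteq> 0 \<and> \<delta> ^ p = NN \<and> \<sigma> \<delta> = \<xi> ^ kummer_index p \<xi> K \<sigma> \<gamma> * \<delta>)"
proof -
  define P where "P = (\<lambda>e. e < p \<and> (\<exists>\<delta>\<in>K. \<delta> \<noteq> 0 \<and> \<delta> ^ p = NN \<and> \<sigma> \<delta> = \<xi> ^ e * \<delta>))"
  obtain \<delta> where d: "\<delta> \<in> K" "\<delta> \<noteq> 0" "NN = \<delta> ^ p" using NN_pth[OF ip] unfolding pth_power_in_def by blast
  have "(\<sigma> \<delta>) ^ p = \<delta> ^ p" using fh_power[OF sfK sig_fhom d(1)] sig_NN d(3) by simp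
  then have "(\<sigma> \<delta> / \<delta>) ^ p = 1" using d(2) by (simp add: power_divide)
  then obtain e where e: "e < p" "\<sigma> \<delta> / \<delta> = \<xi> ^ e" using root_of_unity[OF pp xp x1] by blast
  have Pe: "P e" unfolding P_def using e d by (intro conjI bexI[of _ \<delta>]) (auto simp: field_simps)
  have uniq: "e2 = e" if "P e2" for e2
  proof -
    have "e2 < p \<and> (\<exists>\<delta>\<in>K. \<delta> \<noteq> 0 \<and> \<delta> ^ p = NN \<and> \<sigma> \<delta> = \<xi> ^ e2 * \<delta>)"
      using that by (simp add: P_def)
    then obtain \<delta>2 where d2: "\<delta>2 \<in> K" "\<delta>2 \<noteq> 0" "\<delta>2 ^ p = NN" "\<sigma> \<delta>2 = \<xi> ^ e2 * \<delta>2" and e2: "e2 < p"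
      by blast
    have "(\<delta>2 / \<delta>) ^ p = 1" using d2(3) d(3) d(2) by (simp add: power_divide)
    then obtain s where s: "\<delta>2 / \<delta> = \<xi> ^ s" using root_of_unity[OF pp xp x1] by blast
    then have ds: "\<delta>2 = \<xi> ^ s * \<delta>" using d(2) by (simp add: field_simps)
    have "\<sigma> \<delta>2 = \<xi> ^ s * \<sigma> \<delta>"
      unfolding ds using fh_mult[OF sfK sig_fhom sf_power[OF sfK xiK] d(1)] sig_F[OF sf_power[OF sfF xiF]] by simp
    have sd: "\<sigma> \<delta> = \<xi> ^ e * \<delta>" using e(2) d(2) by (simp add: field_simps)
    have "\<sigma> \<delta>2 = \<xi> ^ s * (\<xi> ^ e * \<delta>)" using \<open>\<sigma> \<delta>2 = \<xi> ^ s * \<sigma> \<delta>\<close> sd by simp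
    then have "\<xi> ^ e2 * \<delta>2 = \<xi> ^ s * (\<xi> ^ e * \<delta>)" using d2(4) by metis
    then have "\<xi> ^ e2 * (\<xi> ^ s * \<delta>) = \<xi> ^ s * (\<xi> ^ e * \<delta>)" unfolding ds .
    then have "\<xi> ^ e2 * (\<xi> ^ s * \<delta>) = \<xi> ^ e * (\<xi> ^ s * \<delta>)" by (simp only: mult.left_commute)
    moreover have "\<xi> ^ s * \<delta> \<noteq> 0" using xi0 d(2) by simp
    ultimately have "\<xi> ^ e2 = \<xi> ^ e" by (metis mult_cancel_right)
    then show ?thesis using xi_pow_inj[OF pp xp x1 e2 e(1)] by simp
  qed
  have "kummer_index p \<xi> K \<sigma> \<gamma> = e"
    unfolding kummer_index_def P_def[symmetric] using Pe uniq by (rule the_equality)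
  then show ?thesis using Pe unfolding P_def by simp
qed

lemma inJ: "i < p \<Longrightarrow> in_J p K \<sigma> (p - 1) \<gamma>"
  unfolding in_J_def rho_iter_eq using pth_ge by simp

end


context msetup
begin

abbreviation GL :: "('a \<Rightarrow> 'a) set" where "GL \<equiv> Gal L F"

lemma FL: "F \<subseteq> L" using FK KL by auto

lemma gal_aut: "g \<in> GL \<Longrightarrow> is_aut_over L F g" unfolding Gal_def by simp
lemma gal_out: "g \<in> GL \<Longrightarrow> x \<notin> L \<Longrightarrow> g x = x" unfolding Gal_def by simp
lemma gal_F: "g \<in> GL \<Longrightarrow> x \<in> F \<Longrightarrow> g x = x" unfolding Gal_def is_aut_over_def by simp
lemma gal_bij_L: "g \<in> GL \<Longrightarrow> bij_betw g L L" unfolding Gal_def is_aut_over_def by simp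
lemma gal_L: "g \<in> GL \<Longrightarrow> x \<in> L \<Longrightarrow> g x \<in> L" using gal_bij_L by (meson bij_betwE)
lemma gal_fhom: "g \<in> GL \<Longrightarrow> fhom L g"
  unfolding fhom_def using gal_F[of g 1] sf_1[OF sfF] unfolding Gal_def is_aut_over_def by auto

lemma gal_inj: "g \<in> GL \<Longrightarrow> inj g"
proof (rule injI)
  fix x y assume g: "g \<in> GL" and e: "g x = g y"
  have iL: "inj_on g L" using gal_bij_L[OF g] bij_betw_def by blast
  show "x = y"
  proof (cases "x \<in> L"; cases "y \<in> L")
    assume "x \<in> L" "y \<in> L" then show ?thesis using inj_onD[OF iL e] by blast
  next
    assume "x \<in> L" "y \<notin> L" then show ?thesis using e gal_L[OF g] gal_out[OF g] by metis
  next
    assume "x \<notin> L" "y \<in> L" then show ?thesis using e gal_L[OF g] gal_out[OF g] by metis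
  next
    assume "x \<notin> L" "y \<notin> L" then show ?thesis using e gal_out[OF g] by metis
  qed
qed

lemma gal_surj: "g \<in> GL \<Longrightarrow> surj g"
proof -
  assume g: "g \<in> GL"
  have "y \<in> range g" for y
  proof (cases "y \<in> L")
    case True
    then have "y \<in> g ` L" using gal_bij_L[OF g] unfolding bij_betw_def by simp
    then show ?thesis by auto
  next
    case False
    then have "g y = y" using gal_out[OF g] by simp
    then show ?thesis by (metis rangeI)
  qed
  then show ?thesis by auto
qed

lemma gal_comp: "g \<in> GL \<Longrightarrow> h \<in> GL \<Longrightarrow> g \<circ> h \<in> GL"
proof -
  assume g: "g \<in> GL" and h: "h \<in> GL"
  have "bij_betw (g \<circ> h) L L" using gal_bij_L[OF g] gal_bij_L[OF h] by (rule bij_betw_trans[rotated])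
  moreover have "\<forall>x\<in>L. \<forall>y\<in>L. (g \<circ> h) (x + y) = (g \<circ> h) x + (g \<circ> h) y \<and> (g \<circ> h) (x * y) = (g \<circ> h) x * (g \<circ> h) y"
    using fh_add[OF L_sub gal_fhom[OF g]] fh_add[OF L_sub gal_fhom[OF h]]
      fh_mult[OF L_sub gal_fhom[OF g]] fh_mult[OF L_sub gal_fhom[OF h]] gal_L[OF h] by simp
  moreover have "\<forall>x\<in>F. (g \<circ> h) x = x" using gal_F[OF g] gal_F[OF h] by simp
  moreover have "\<forall>x. x \<notin> L \<longrightarrow> (g \<circ> h) x = x" using gal_out[OF g] gal_out[OF h] by simp
  ultimately show ?thesis unfolding Gal_def is_aut_over_def by simp
qed

lemma gal_id: "id \<in> GL"
  unfolding Gal_def is_aut_over_def by (simp add: bij_betw_id)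

lemma gal_pow: "g \<in> GL \<Longrightarrow> g ^^ n \<in> GL"
  by (induction n) (auto simp: gal_id gal_comp)

lemma gal_eqI:
  assumes g: "g \<in> GL" and h: "h \<in> GL" and K: "\<And>x. x \<in> K \<Longrightarrow> g x = h x"
    and B: "\<And>j. j < i \<Longrightarrow> g (bt j) = h (bt j)"
  shows "g = h"
proof
  fix x show "g x = h x"
  proof (cases "x \<in> L")
    case True
    have "\<And>y. y \<in> field_gen (K \<union> bt ` {..<i}) \<Longrightarrow> g y = h y"
      by (rule fhom_agree[OF L_sub gal_fhom[OF g] gal_fhom[OF h]]) (use KL bt_L K B in auto)
    then show ?thesis using True L_fg by simp
  next
    case False then show ?thesis using gal_out[OF g False] gal_out[OF h False] by simp
  qed
qed

lemma gal_cancel_right: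
  assumes g: "g \<in> GL" and e: "f1 \<circ> g = f2 \<circ> g" shows "f1 = f2"
proof
  fix x
  obtain y where "x = g y" using gal_surj[OF g] by (metis surjD)
  then show "f1 x = f2 x" using fun_cong[OF e, of y] by simp
qed

lemma gal_cancel_left:
  assumes g: "g \<in> GL" and e: "g \<circ> f1 = g \<circ> f2" shows "f1 = f2"
proof
  fix x
  have "g (f1 x) = g (f2 x)" using fun_cong[OF e, of x] by simp
  then show "f1 x = f2 x" using gal_inj[OF g] by (meson injD)
qed

lemma gal_restrict:
  assumes g: "g \<in> GL"
  shows "\<exists>k<p. \<forall>x\<in>K. g x = (\<sigma> ^^ k) x"
proof -
  have aL: "\<alpha> \<in> L" using alphaK KL by auto
  have "g (\<alpha> ^ p) = g \<alpha> ^ p" by (rule fh_power[OF L_sub gal_fhom[OF g] aL])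
  then have "g \<alpha> ^ p = g a" using aa by simp
  also have "\<dots> = a" using gal_F[OF g aF] .
  finally have "(g \<alpha> / \<alpha>) ^ p = 1" using aa alpha0 a0 by (simp add: power_divide)
  then obtain k where k: "k < p" "g \<alpha> / \<alpha> = \<xi> ^ k" using root_of_unity[OF pp xp x1] by blast
  then have ga: "g \<alpha> = \<xi> ^ k * \<alpha>" using alpha0 by (simp add: field_simps)
  have fK: "fhom K g" using gal_fhom[OF g] KL unfolding fhom_def by (auto simp: subset_iff)
  have "\<And>y. y \<in> field_gen (F \<union> {\<alpha>}) \<Longrightarrow> g y = (\<sigma> ^^ k) y"
    by (rule fhom_agree[OF sfK fK sigp_fhom]) (use FK alphaK gal_F[OF g] sigp_F sigp_alpha ga in auto)
  then show ?thesis using k K_def by auto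
qed

lemma gal_K: "g \<in> GL \<Longrightarrow> x \<in> K \<Longrightarrow> g x \<in> K"
  using gal_restrict sigp_K by metis

subsection \<open>Existence of automorphisms\<close>

lemma galext:
  assumes bL: "\<And>j. j < i \<Longrightarrow> b' j \<in> L"
    and bp: "\<And>j. j < i \<Longrightarrow> b' j ^ p = (\<sigma> ^^ k) (gp j)"
    and bs: "\<And>j. j < i \<Longrightarrow> bt j \<in> field_gen (K \<union> b' ` {..<i})"
  shows "\<exists>g\<in>GL. (\<forall>x\<in>K. g x = (\<sigma> ^^ k) x) \<and> (\<forall>j<i. g (bt j) = b' j)"
proof -
  have "\<exists>\<tau>. fhom (Et t) \<tau> \<and> (\<forall>x\<in>Et t. \<tau> x \<in> L) \<and> (\<forall>x\<in>K. \<tau> x = (\<sigma> ^^ k) x)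
            \<and> (\<forall>l\<in>{i - t..<i}. \<tau> (bt l) = b' l)" if "t \<le> i" for t
    using that
  proof (induction t)
    case 0
    have "fhom K (\<sigma> ^^ k)" by (rule sigp_fhom)
    moreover have "\<forall>x\<in>K. (\<sigma> ^^ k) x \<in> L" using sigp_K KL by auto
    ultimately show ?case by (intro exI[of _ "\<sigma> ^^ k"]) auto
  next
    case (Suc t)
    then have t: "t < i" and I: "Inv t" using Inv_all by auto
    obtain \<tau> where \<tau>: "fhom (Et t) \<tau>" "\<forall>x\<in>Et t. \<tau> x \<in> L" "\<forall>x\<in>K. \<tau> x = (\<sigma> ^^ k) x"
      "\<forall>l\<in>{i - t..<i}. \<tau> (bt l) = b' l" using Suc by auto
    define j where "j = i - 1 - t"
    interpret ks: kstep p \<xi> "Et t" "gp j" "bt j" using Inv_kstep[OF I t] unfolding j_def .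
    have KE: "K \<subseteq> Et t" and sfE: "is_subfield (Et t)" and fgE: "Et t = field_gen (K \<union> bt ` {i - t..<i})"
      using I unfolding Inv_def by auto
    have jt: "j < i" using t unfolding j_def by simp
    have b'p: "b' j ^ p = \<tau> (gp j)" using bp[OF jt] \<tau>(3) gp_K by simp
    define \<tau>' where "\<tau>' = ks.ext \<tau> (b' j)"
    have EtS: "Et (Suc t) = adj (Et t) (bt j)" unfolding j_def by simp
    have f': "fhom (Et (Suc t)) \<tau>'" unfolding EtS \<tau>'_def by (rule ks.ext_fhom[OF \<tau>(1) b'p])
    have into: "\<forall>x\<in>Et (Suc t). \<tau>' x \<in> L"
      unfolding EtS \<tau>'_def using ks.ext_into[OF \<tau>(1) b'p L_sub _ bL[OF jt]] \<tau>(2) by auto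
    have onE: "\<tau>' x = \<tau> x" if "x \<in> Et t" for x
      unfolding \<tau>'_def using ks.ext_E[OF \<tau>(1) b'p that] .
    have onK: "\<forall>x\<in>K. \<tau>' x = (\<sigma> ^^ k) x" using onE KE \<tau>(3) by auto
    have btE: "bt l \<in> Et t" if "l \<in> {i - t..<i}" for l
      using that fgE field_gen_sub[of "K \<union> bt ` {i - t..<i}"] by auto
    have onB: "\<forall>l\<in>{i - Suc t..<i}. \<tau>' (bt l) = b' l"
    proof
      fix l assume l: "l \<in> {i - Suc t..<i}"
      show "\<tau>' (bt l) = b' l"
      proof (cases "l = j")
        case True then show ?thesis unfolding \<tau>'_def using ks.ext_beta[OF \<tau>(1) b'p] by simp
      next
        case False
        then have "l \<in> {i - t..<i}" using l t unfolding j_def by auto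
        then show ?thesis using onE btE \<tau>(4) by auto
      qed
    qed
    show ?case using f' into onK onB by blast
  qed
  from this[of i] obtain \<tau> where \<tau>: "fhom L \<tau>" "\<forall>x\<in>L. \<tau> x \<in> L" "\<forall>x\<in>K. \<tau> x = (\<sigma> ^^ k) x"
      "\<forall>l\<in>{..<i}. \<tau> (bt l) = b' l"
    unfolding L_def by (auto simp: atLeast0LessThan)
  define g where "g = (\<lambda>x. if x \<in> L then \<tau> x else x)"
  have surjL: "L \<subseteq> \<tau> ` L"
  proof -
    have sfI: "is_subfield (\<tau> ` L)" by (rule fh_image_subfield[OF L_sub \<tau>(1)])
    have "K \<subseteq> \<tau> ` L"
    proof
      fix y assume "y \<in> K"
      then obtain x where "x \<in> K" "(\<sigma> ^^ k) x = y" using sigp_surj by blast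
      then show "y \<in> \<tau> ` L" using \<tau>(3) KL by force
    qed
    moreover have "b' ` {..<i} \<subseteq> \<tau> ` L"
    proof
      fix y assume "y \<in> b' ` {..<i}"
      then obtain l where l: "l < i" "y = b' l" by auto
      then show "y \<in> \<tau> ` L" using \<tau>(4) bt_L[of l] by (metis image_eqI lessThan_iff)
    qed
    ultimately have "field_gen (K \<union> b' ` {..<i}) \<subseteq> \<tau> ` L" using field_gen_least[OF sfI] by simp
    then have "bt ` {..<i} \<subseteq> \<tau> ` L" using bs by auto
    have sub: "field_gen (K \<union> bt ` {..<i}) \<subseteq> \<tau> ` L"
      by (rule field_gen_least[OF sfI]) (use \<open>bt ` {..<i} \<subseteq> \<tau> ` L\<close> \<open>K \<subseteq> \<tau> ` L\<close> in auto)
    from sub show ?thesis by (simp only: L_fg[symmetric])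
  qed
  have "bij_betw g L L"
  proof -
    have "inj_on \<tau> L" by (rule fh_inj[OF L_sub \<tau>(1)])
    moreover have "\<tau> ` L = L" using surjL \<tau>(2) by auto
    ultimately have "bij_betw \<tau> L L" unfolding bij_betw_def by simp
    then show ?thesis unfolding g_def by (rule bij_betw_cong[THEN iffD1, rotated]) simp
  qed
  moreover have "\<forall>x\<in>L. \<forall>y\<in>L. g (x + y) = g x + g y \<and> g (x * y) = g x * g y"
    unfolding g_def using fh_add[OF L_sub \<tau>(1)] fh_mult[OF L_sub \<tau>(1)] sf_add[OF L_sub] sf_mult[OF L_sub] by simp
  moreover have "\<forall>x\<in>F. g x = x" unfolding g_def using \<tau>(3) FK FL sigp_F by auto
  moreover have "\<forall>x. x \<notin> L \<longrightarrow> g x = x" unfolding g_def by simp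
  ultimately have "g \<in> GL" unfolding Gal_def is_aut_over_def by simp
  moreover have "\<forall>x\<in>K. g x = (\<sigma> ^^ k) x" unfolding g_def using \<tau>(3) KL by auto
  moreover have "\<forall>j<i. g (bt j) = b' j" unfolding g_def using \<tau>(4) bt_L by auto
  ultimately show ?thesis by blast
qed

definition nv :: "(nat \<Rightarrow> nat) \<Rightarrow> 'a \<Rightarrow> 'a" where
  "nv v = (SOME g. g \<in> GL \<and> (\<forall>x\<in>K. g x = x) \<and> (\<forall>j<i. g (bt j) = \<xi> ^ v j * bt j))"

lemma nv_ex: "\<exists>g. g \<in> GL \<and> (\<forall>x\<in>K. g x = x) \<and> (\<forall>j<i. g (bt j) = \<xi> ^ v j * bt j)"
proof -
  have "\<exists>g\<in>GL. (\<forall>x\<in>K. g x = (\<sigma> ^^ 0) x) \<and> (\<forall>j<i. g (bt j) = \<xi> ^ v j * bt j)"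
  proof (rule galext)
    show "\<xi> ^ v j * bt j \<in> L" for j using sf_mult[OF L_sub sf_power[OF L_sub xiL] bt_L] .
    show "(\<xi> ^ v j * bt j) ^ p = (\<sigma> ^^ 0) (gp j)" for j
      using bt_p xp by (simp add: power_mult_distrib power_mult[symmetric] mult.commute[of _ p] power_mult)
    show "bt j \<in> field_gen (K \<union> (\<lambda>j. \<xi> ^ v j * bt j) ` {..<i})" if "j < i" for j
    proof -
      have "\<xi> ^ v j * bt j \<in> field_gen (K \<union> (\<lambda>j. \<xi> ^ v j * bt j) ` {..<i})"
        by (rule subsetD[OF field_gen_sub]) (use that in auto)
      moreover have "\<xi> ^ v j \<in> field_gen (K \<union> (\<lambda>j. \<xi> ^ v j * bt j) ` {..<i})"
        by (rule subsetD[OF field_gen_sub]) (use sf_power[OF sfK xiK] in auto)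
      ultimately have "\<xi> ^ v j * bt j / \<xi> ^ v j \<in> field_gen (K \<union> (\<lambda>j. \<xi> ^ v j * bt j) ` {..<i})"
        by (rule sf_divide[OF field_gen_subfield])
      then show ?thesis using xi0 by simp
    qed
  qed
  then show ?thesis by auto
qed

lemma nv: "nv v \<in> GL" "\<And>x. x \<in> K \<Longrightarrow> nv v x = x" "\<And>j. j < i \<Longrightarrow> nv v (bt j) = \<xi> ^ v j * bt j"
  using someI_ex[OF nv_ex[of v]] unfolding nv_def[symmetric] by auto

lemma nv_unique: "g \<in> GL \<Longrightarrow> (\<And>x. x \<in> K \<Longrightarrow> g x = x) \<Longrightarrow> (\<And>j. j < i \<Longrightarrow> g (bt j) = \<xi> ^ v j * bt j) \<Longrightarrow> g = nv v"
  by (rule gal_eqI) (auto simp: nv)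

lemma nv_comp: "nv v \<circ> nv w = nv (\<lambda>j. v j + w j)"
proof (rule nv_unique)
  show "nv v \<circ> nv w \<in> GL" by (intro gal_comp nv)
  show "\<And>x. x \<in> K \<Longrightarrow> (nv v \<circ> nv w) x = x" by (simp add: nv)
  fix j assume j: "j < i"
  have "(nv v \<circ> nv w) (bt j) = nv v (\<xi> ^ w j) * nv v (bt j)"
    using nv(3)[OF j, of w] fh_mult[OF L_sub gal_fhom[OF nv(1)] sf_power[OF L_sub xiL] bt_L] by simp
  also have "\<dots> = \<xi> ^ (v j + w j) * bt j" using nv(2) nv(3)[OF j] sf_power[OF sfK xiK] by (simp add: power_add)
  finally show "(nv v \<circ> nv w) (bt j) = \<xi> ^ (v j + w j) * bt j" .
qed

lemma nv_cong: "(\<And>j. j < i \<Longrightarrow> v j mod p = w j mod p) \<Longrightarrow> nv v = nv w"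
proof (rule nv_unique)
  fix j assume "\<And>j. j < i \<Longrightarrow> v j mod p = w j mod p" "j < i"
  then show "nv v (bt j) = \<xi> ^ w j * bt j" using nv(3) xi_pow_eq_iff[OF pp xp x1] by metis
qed (auto simp: nv)

lemma nv_zero: "(\<And>j. j < i \<Longrightarrow> v j mod p = 0) \<Longrightarrow> nv v = id"
proof -
  assume h: "\<And>j. j < i \<Longrightarrow> v j mod p = 0"
  have "id = nv v"
  proof (rule nv_unique[OF gal_id])
    show "\<And>x. x \<in> K \<Longrightarrow> id x = x" by simp
    fix j assume j: "j < i"
    have "\<xi> ^ v j = 1" using xi_pow_mod[OF pp xp x1, of "v j"] h[OF j] by simp
    then show "id (bt j) = \<xi> ^ v j * bt j" by simp
  qed
  then show ?thesis by simp
qed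

lemma nv_eq_D: "nv v = nv w \<Longrightarrow> j < i \<Longrightarrow> v j mod p = w j mod p"
proof -
  assume e: "nv v = nv w" and j: "j < i"
  have "\<xi> ^ v j * bt j = \<xi> ^ w j * bt j" using nv(3)[OF j, of v] nv(3)[OF j, of w] e by metis
  then have "\<xi> ^ v j = \<xi> ^ w j" using bt_nz by (metis mult_cancel_right)
  then show ?thesis using xi_pow_eq_iff[OF pp xp x1] by simp
qed

lemma kernel_nv:
  assumes g: "g \<in> GL" and gK: "\<And>x. x \<in> K \<Longrightarrow> g x = x"
  shows "\<exists>v. g = nv v"
proof -
  have "\<exists>s. j < i \<longrightarrow> g (bt j) = \<xi> ^ s * bt j" for j
  proof (cases "j < i")
    case True
    have "g (bt j) ^ p = g (gp j)" using fh_power[OF L_sub gal_fhom[OF g] bt_L] bt_p by metis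
    also have "\<dots> = gp j" using gK gp_K by simp
    finally have "(g (bt j) / bt j) ^ p = 1" using bt_p bt_nz gp_nz by (simp add: power_divide)
    then obtain s where "g (bt j) / bt j = \<xi> ^ s" using root_of_unity[OF pp xp x1] by blast
    then show ?thesis using bt_nz by (intro exI[of _ s]) (simp add: field_simps)
  qed simp
  then obtain v where v: "\<And>j. j < i \<Longrightarrow> g (bt j) = \<xi> ^ v j * bt j" by metis
  show ?thesis using nv_unique[OF g gK v] by blast
qed

subsection \<open>The lift mu of sigma inverse\<close>

definition mu :: "'a \<Rightarrow> 'a" where
  "mu = (SOME g. g \<in> GL \<and> (\<forall>x\<in>K. g x = sig' x) \<and> (\<forall>j<i. g (bt j) = bt j * bt (Suc j)))"

lemma mu_ex: "\<exists>g. g \<in> GL \<and> (\<forall>x\<in>K. g x = sig' x) \<and> (\<forall>j<i. g (bt j) = bt j * bt (Suc j))"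
proof -
  define S where "S = field_gen (K \<union> (\<lambda>j. bt j * bt (Suc j)) ` {..<i})"
  have sfS: "is_subfield S" unfolding S_def by (rule field_gen_subfield)
  have KS: "K \<subseteq> S" unfolding S_def using field_gen_sub[of "K \<union> (\<lambda>j. bt j * bt (Suc j)) ` {..<i}"] by auto
  have prS: "bt j * bt (Suc j) \<in> S" if "j < i" for j unfolding S_def
    by (rule subsetD[OF field_gen_sub]) (use that in auto)
  have down: "\<forall>j. i - d \<le> j \<longrightarrow> j \<le> i \<longrightarrow> bt j \<in> S" for d
  proof (induction d)
    case 0 then show ?case using bt_K KS by auto
  next
    case (Suc d)
    show ?case
    proof (intro allI impI)
      fix j assume j: "i - Suc d \<le> j" "j \<le> i"
      show "bt j \<in> S"
      proof (cases "i - d \<le> j")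
        case True then show ?thesis using Suc j by auto
      next
        case False
        then have jl: "j < i" and sj: "i - d \<le> Suc j" "Suc j \<le> i" using j by auto
        have "bt (Suc j) \<in> S" using Suc sj by auto
        then have "bt j * bt (Suc j) / bt (Suc j) \<in> S" using sf_divide[OF sfS prS[OF jl]] by blast
        then show ?thesis using bt_nz by simp
      qed
    qed
  qed
  have "\<exists>g\<in>GL. (\<forall>x\<in>K. g x = (\<sigma> ^^ (p - 1)) x) \<and> (\<forall>j<i. g (bt j) = bt j * bt (Suc j))"
  proof (rule galext)
    show "bt j * bt (Suc j) \<in> L" for j by (rule sf_mult[OF L_sub bt_L bt_L])
    show "(bt j * bt (Suc j)) ^ p = (\<sigma> ^^ (p - 1)) (gp j)" for j
    proof -
      have "(bt j * bt (Suc j)) ^ p = gp j * rho' (gp j)" by (simp add: power_mult_distrib bt_p gp_Suc)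
      also have "\<dots> = sig' (gp j)" unfolding rho'_def using gp_nz by simp
      finally show ?thesis unfolding sig'_def .
    qed
    show "bt j \<in> field_gen (K \<union> (\<lambda>j. bt j * bt (Suc j)) ` {..<i})" if "j < i" for j
      using down[of i] that unfolding S_def by auto
  qed
  then show ?thesis unfolding sig'_def by auto
qed

lemma mu: "mu \<in> GL" "\<And>x. x \<in> K \<Longrightarrow> mu x = sig' x" "\<And>j. j < i \<Longrightarrow> mu (bt j) = bt j * bt (Suc j)"
  using someI_ex[OF mu_ex] unfolding mu_def[symmetric] by auto

lemma mu_bt: "mu (bt l) = bt l * bt (Suc l)"
proof (cases "l < i")
  case True then show ?thesis using mu(3) by simp
next
  case False
  then have l: "i \<le> l" by simp
  have "mu (bt l) = sig' (bt l)" using mu(2) bt_K[OF l] by simp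
  also have "\<dots> = bt l * rho' (bt l)" unfolding rho'_def using bt_nz by simp
  finally show ?thesis using bt_rho'[OF l] by simp
qed

definition T :: "(nat \<Rightarrow> nat) \<Rightarrow> nat \<Rightarrow> nat" where
  "T v j = v j + (if Suc j < i then v (Suc j) else 0)"

lemma nv_mu: "nv v \<circ> mu = mu \<circ> nv (T v)"
proof (rule gal_eqI)
  show "nv v \<circ> mu \<in> GL" "mu \<circ> nv (T v) \<in> GL" by (intro gal_comp nv mu)+
  fix x assume x: "x \<in> K"
  show "(nv v \<circ> mu) x = (mu \<circ> nv (T v)) x" using x mu(2) nv(2) sig'_K by simp
next
  fix j assume j: "j < i"
  have xiF': "\<xi> ^ n \<in> F" for n using sf_power[OF sfF xiF] .
  have "(nv v \<circ> mu) (bt j) = nv v (bt j) * nv v (bt (Suc j))"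
    using mu(3)[OF j] fh_mult[OF L_sub gal_fhom[OF nv(1)] bt_L bt_L] by simp
  also have "\<dots> = \<xi> ^ T v j * (bt j * bt (Suc j))"
  proof (cases "Suc j < i")
    case True then show ?thesis using nv(3)[OF j] nv(3)[OF True] by (simp add: T_def power_add mult_ac)
  next
    case False then show ?thesis using nv(3)[OF j] nv(2) bt_K[of "Suc j"] by (simp add: T_def)
  qed
  also have "\<dots> = (mu \<circ> nv (T v)) (bt j)"
    using nv(3)[OF j] fh_mult[OF L_sub gal_fhom[OF mu(1)] sf_power[OF L_sub xiL] bt_L] gal_F[OF mu(1) xiF'] mu(3)[OF j]
    by simp
  finally show "(nv v \<circ> mu) (bt j) = (mu \<circ> nv (T v)) (bt j)" .
qed

end


context msetup
begin

lemma mu_K: "x \<in> K \<Longrightarrow> mu x \<in> K" using mu(2) sig'_K by simp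

lemma mup_K: "x \<in> K \<Longrightarrow> (mu ^^ n) x = (sig' ^^ n) x"
proof (induction n)
  case 0 then show ?case by simp
next
  case (Suc n)
  have "(sig' ^^ n) x \<in> K" using sig'p_K Suc.prems by blast
  then show ?case using Suc mu(2) by simp
qed

lemma mup_Gal: "mu ^^ n \<in> GL" by (rule gal_pow[OF mu(1)])

lemma mu_p_kernel: "\<exists>w. mu ^^ p = nv w"
proof (rule kernel_nv[OF mup_Gal])
  fix x assume "x \<in> K"
  then show "(mu ^^ p) x = x" using mup_K sig'_p by simp
qed

definition w0 :: "nat \<Rightarrow> nat" where "w0 = (SOME w. mu ^^ p = nv w)"

lemma mu_p: "mu ^^ p = nv w0"
  unfolding w0_def using someI_ex[OF mu_p_kernel] .

lemma comp_funpow_Suc: "f ^^ n \<circ> f = f ^^ Suc n"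
  by (rule funpow_Suc_right[symmetric])

lemma w0_Suc: "Suc j < i \<Longrightarrow> w0 (Suc j) mod p = 0"
proof -
  assume j: "Suc j < i"
  have "mu \<circ> mu ^^ p = mu ^^ p \<circ> mu" by (simp add: fun_eq_iff funpow_swap1)
  then have "mu \<circ> nv w0 = mu \<circ> nv (T w0)" unfolding mu_p nv_mu by simp
  then have "nv w0 = nv (T w0)" by (rule gal_cancel_left[OF mu(1)])
  then have "w0 j mod p = T w0 j mod p" by (rule nv_eq_D) (use j in simp)
  then have "[w0 j + 0 = w0 j + w0 (Suc j)] (mod p)" using j unfolding T_def cong_def by simp
  then have "[0 = w0 (Suc j)] (mod p)" by (simp only: cong_add_lcancel_nat)
  then show ?thesis unfolding cong_def by simp
qed

lemma sigp_delta: "\<delta> \<in> K \<Longrightarrow> \<sigma> \<delta> = \<xi> ^ e * \<delta> \<Longrightarrow> (\<sigma> ^^ n) \<delta> = \<xi> ^ (e * n) * \<delta>"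
proof (induction n)
  case 0 then show ?case by simp
next
  case (Suc n)
  have "(\<sigma> ^^ Suc n) \<delta> = \<sigma> (\<xi> ^ (e * n) * \<delta>)" using Suc by simp
  also have "\<dots> = \<xi> ^ (e * n) * \<sigma> \<delta>"
    using fh_mult[OF sfK sig_fhom sf_power[OF sfK xiK] Suc.prems(1)] sig_F[OF sf_power[OF sfF xiF]] by simp
  also have "\<dots> = \<xi> ^ (e * Suc n) * \<delta>" using Suc.prems(2) by (simp add: power_add mult_ac)
  finally show ?case .
qed

lemma prod_sig'_NN: "(\<Prod>k<p. (sig' ^^ k) \<gamma>) = NN"
proof -
  define \<phi> where "\<phi> = (\<lambda>k. ((p - 1) * k) mod p)"
  have inj: "inj_on \<phi> {..<p}"
  proof (rule inj_onI)
    fix x y assume "x \<in> {..<p}" "y \<in> {..<p}" "\<phi> x = \<phi> y"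
    then have "[(p - 1) * x = (p - 1) * y] (mod p)" unfolding \<phi>_def cong_def by simp
    then have "[x = y] (mod p)" using cong_mult_lcancel_nat coprime_diff_one_left_nat p0 by blast
    then show "x = y" using \<open>x \<in> {..<p}\<close> \<open>y \<in> {..<p}\<close> cong_less_modulus_unique_nat by auto
  qed
  have sub: "\<phi> ` {..<p} \<subseteq> {..<p}" unfolding \<phi>_def using p0 by auto
  have img: "\<phi> ` {..<p} = {..<p}" by (rule endo_inj_surj[OF _ sub inj]) simp
  have bij: "bij_betw \<phi> {..<p} {..<p}" using inj img unfolding bij_betw_def by simp
  have "(\<Prod>k<p. (sig' ^^ k) \<gamma>) = (\<Prod>k<p. (\<sigma> ^^ \<phi> k) \<gamma>)"
    unfolding sig'_pow \<phi>_def using sig_mod gK by (intro prod.cong refl) blast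
  also have "\<dots> = (\<Prod>k<p. (\<sigma> ^^ k) \<gamma>)" by (rule prod.reindex_bij_betw[OF bij])
  finally show ?thesis unfolding norm_KF_def .
qed

lemma w0_0_lt:
  assumes i0: "0 < i" and ip: "i < p"
  shows "\<xi> ^ w0 0 = \<xi> ^ (kummer_index p \<xi> K \<sigma> \<gamma> * (p - 1))"
proof -
  define e where "e = kummer_index p \<xi> K \<sigma> \<gamma>"
  obtain \<delta> where d: "\<delta> \<in> K" "\<delta> \<noteq> 0" "\<delta> ^ p = NN" "\<sigma> \<delta> = \<xi> ^ e * \<delta>"
    using kidx[OF ip] unfolding e_def by blast
  define f where "f = (\<lambda>k. (mu ^^ k) (bt 0))"
  have fL: "f k \<in> L" for k unfolding f_def using gal_L[OF mup_Gal bt_L] .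
  have fnz: "f k \<noteq> 0" for k unfolding f_def
    using fh_eq_0_iff[OF L_sub gal_fhom[OF mup_Gal] bt_L] bt_nz by blast
  define D where "D = (\<Prod>k<p. f k)"
  have DL: "D \<in> L" unfolding D_def by (intro sf_prod[OF L_sub] fL)
  have Dnz: "D \<noteq> 0" unfolding D_def using fnz by simp
  obtain m where m: "p = Suc m" using p0 by (cases p) auto
  have fp: "f p = \<xi> ^ w0 0 * f 0" unfolding f_def mu_p using nv(3)[OF i0] by simp
  have muD: "mu D = \<xi> ^ w0 0 * D"
  proof -
    have "mu D = (\<Prod>k<p. f (Suc k))" unfolding D_def f_def
      using fh_prod[OF L_sub gal_fhom[OF mu(1)], of "{..<p}" "\<lambda>k. (mu ^^ k) (bt 0)"] fL[unfolded f_def] by simp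
    also have "\<dots> = (\<Prod>k<m. f (Suc k)) * f p" unfolding m by (rule prod.lessThan_Suc)
    also have "\<dots> = \<xi> ^ w0 0 * (f 0 * (\<Prod>k<m. f (Suc k)))" unfolding fp by (simp add: mult_ac)
    also have "f 0 * (\<Prod>k<m. f (Suc k)) = D" unfolding D_def m by (rule prod.lessThan_Suc_shift[symmetric])
    finally show ?thesis .
  qed
  have Dp: "D ^ p = NN"
  proof -
    have "D ^ p = (\<Prod>k<p. f k ^ p)" unfolding D_def by (simp add: prod_power_distrib)
    also have "\<dots> = (\<Prod>k<p. (sig' ^^ k) \<gamma>)"
    proof (intro prod.cong refl)
      fix k
      have "f k ^ p = (mu ^^ k) (bt 0 ^ p)" unfolding f_def
        using fh_power[OF L_sub gal_fhom[OF mup_Gal] bt_L] by metis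
      also have "\<dots> = (mu ^^ k) \<gamma>" using bt_p by (simp add: gp_def)
      also have "\<dots> = (sig' ^^ k) \<gamma>" using mup_K gK by simp
      finally show "f k ^ p = (sig' ^^ k) \<gamma>" .
    qed
    also have "\<dots> = NN" by (rule prod_sig'_NN)
    finally show ?thesis .
  qed
  have NN0: "NN \<noteq> 0" using d(2) d(3) by (metis power_not_zero)
  have "(D / \<delta>) ^ p = 1" using Dp d(3) NN0 by (simp add: power_divide)
  then obtain s where "D / \<delta> = \<xi> ^ s" using root_of_unity[OF pp xp x1] by blast
  then have Ds: "D = \<xi> ^ s * \<delta>" using d(2) by (simp add: field_simps)
  have dL: "\<delta> \<in> L" using d(1) KL by auto
  have "mu D = \<xi> ^ s * sig' \<delta>"
    unfolding Ds using fh_mult[OF L_sub gal_fhom[OF mu(1)] sf_power[OF L_sub xiL] dL]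
      gal_F[OF mu(1) sf_power[OF sfF xiF]] mu(2)[OF d(1)] by simp
  also have "sig' \<delta> = \<xi> ^ (e * (p - 1)) * \<delta>" unfolding sig'_def by (rule sigp_delta[OF d(1) d(4)])
  finally have "mu D = \<xi> ^ (e * (p - 1)) * D" unfolding Ds by (simp add: mult_ac)
  then have "\<xi> ^ w0 0 * D = \<xi> ^ (e * (p - 1)) * D" using muD by simp
  then show ?thesis using Dnz unfolding e_def by simp
qed

lemma w0_0_p:
  assumes ip: "i = p"
  shows "w0 0 mod p = 0"
proof -
  have i0: "0 < i" using ip p0 by simp
  define S where "S = {x \<in> L. x \<noteq> 0}"
  have "(mu ^^ p) (bt 0) = (\<Prod>l\<le>p. bt (0 + l) ^ (p choose l))"
  proof (rule binom_iter[where S = S and X = bt])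
    show "\<And>x y. x \<in> S \<Longrightarrow> y \<in> S \<Longrightarrow> mu (x * y) = mu x * mu y"
      unfolding S_def using fh_mult[OF L_sub gal_fhom[OF mu(1)]] by auto
    show "\<And>x. x \<in> S \<Longrightarrow> mu x \<in> S" unfolding S_def
      using gal_L[OF mu(1)] fh_eq_0_iff[OF L_sub gal_fhom[OF mu(1)]] by auto
    show "\<And>x y. x \<in> S \<Longrightarrow> y \<in> S \<Longrightarrow> x * y \<in> S" unfolding S_def using sf_mult[OF L_sub] by auto
    show "\<And>l. bt l \<in> S" unfolding S_def using bt_L bt_nz by auto
    show "\<And>l. mu (bt l) = bt l * bt (Suc l)" by (rule mu_bt)
  qed
  also have "\<dots> = bt 0 * bt p * (\<Prod>l\<in>{1..<p}. bt l ^ (p choose l))" by (subst prod_split_p) simp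
  also have "(\<Prod>l\<in>{1..<p}. bt l ^ (p choose l)) = (\<Prod>l\<in>{1..<p}. gp l ^ ((p choose l) div p))"
  proof (intro prod.cong refl)
    fix l assume "l \<in> {1..<p}"
    then have "p choose l = p * ((p choose l) div p)" by (intro choose_div) auto
    then show "bt l ^ (p choose l) = gp l ^ ((p choose l) div p)"
      by (metis bt_p power_mult)
  qed
  also have "bt p = inverse (\<Prod>l\<in>{1..<p}. gp l ^ ((p choose l) div p))"
    using bt_i ip unfolding c0_def by simp
  also have "bt 0 * inverse (\<Prod>l\<in>{1..<p}. gp l ^ ((p choose l) div p)) * (\<Prod>l\<in>{1..<p}. gp l ^ ((p choose l) div p)) = bt 0"
    using gp_nz by simp
  finally have "(mu ^^ p) (bt 0) = bt 0" by simp
  then have "\<xi> ^ w0 0 * bt 0 = \<xi> ^ 0 * bt 0" unfolding mu_p using nv(3)[OF i0] by simp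
  then have "\<xi> ^ w0 0 = \<xi> ^ 0" using bt_nz by (metis mult_cancel_right)
  then have "w0 0 mod p = 0 mod p" using xi_pow_eq_iff[OF pp xp x1] by blast
  then show ?thesis by simp
qed

subsection \<open>The lift of sigma\<close>

definition ssig :: "'a \<Rightarrow> 'a" where "ssig = mu ^^ (p - 1)"

lemma ssig_Gal: "ssig \<in> GL" unfolding ssig_def by (rule mup_Gal)

lemma ssigp_Gal: "ssig ^^ k \<in> GL" by (rule gal_pow[OF ssig_Gal])

lemma ssig_K: "x \<in> K \<Longrightarrow> ssig x = \<sigma> x"
proof -
  assume x: "x \<in> K"
  have "ssig x = (\<sigma> ^^ ((p - 1) * (p - 1))) x" unfolding ssig_def using mup_K[OF x] sig'_pow by simp
  also have "\<dots> = (\<sigma> ^^ (((p - 1) * (p - 1)) mod p)) x" using sig_mod x by blast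
  also have "((p - 1) * (p - 1)) mod p = 1"
  proof -
    have "(p * (p - 2) + 1) mod p = 1 mod p" by (rule mod_mult_self4)
    then show ?thesis unfolding pm1_sq using p1 by simp
  qed
  finally show ?thesis by simp
qed

lemma ssigp_K: "x \<in> K \<Longrightarrow> (ssig ^^ k) x = (\<sigma> ^^ k) x"
proof (induction k)
  case 0 then show ?case by simp
next
  case (Suc k)
  then show ?case using ssig_K sigp_K by simp
qed

lemma nv_pow: "nv w ^^ n = nv (\<lambda>j. n * w j)"
proof (induction n)
  case 0 then show ?case using nv_zero[of "\<lambda>j. 0"] by simp
next
  case (Suc n)
  then show ?case by (simp add: nv_comp)
qed

lemma ssig_nv: "ssig \<circ> nv v = nv (T v) \<circ> ssig"
proof (rule gal_cancel_right[OF mu(1)])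
  have e1: "mu ^^ (p - 1) \<circ> mu = mu ^^ p" using p0 by (simp add: comp_funpow_Suc)
  have "ssig \<circ> nv v \<circ> mu = mu ^^ (p - 1) \<circ> (nv v \<circ> mu)" unfolding ssig_def by (simp add: comp_assoc)
  also have "\<dots> = (mu ^^ (p - 1) \<circ> mu) \<circ> nv (T v)" unfolding nv_mu by (simp add: comp_assoc)
  also have "\<dots> = nv (\<lambda>j. w0 j + T v j)" unfolding e1 mu_p nv_comp ..
  also have "\<dots> = nv (\<lambda>j. T v j + w0 j)" by (simp add: add.commute)
  also have "\<dots> = nv (T v) \<circ> (mu ^^ (p - 1) \<circ> mu)" unfolding e1 mu_p nv_comp ..
  also have "\<dots> = nv (T v) \<circ> ssig \<circ> mu" unfolding ssig_def by (simp add: comp_assoc)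
  finally show "ssig \<circ> nv v \<circ> mu = nv (T v) \<circ> ssig \<circ> mu" .
qed

lemma ssig_p: "ssig ^^ p = nv (\<lambda>j. (p - 1) * w0 j)"
proof -
  have "ssig ^^ p = mu ^^ ((p - 1) * p)" unfolding ssig_def by (simp add: funpow_mult)
  also have "\<dots> = (mu ^^ p) ^^ (p - 1)" by (simp add: funpow_mult mult.commute)
  also have "\<dots> = nv (\<lambda>j. (p - 1) * w0 j)" unfolding mu_p nv_pow ..
  finally show ?thesis .
qed

end


lemma nat_mod_add: "0 \<le> a \<Longrightarrow> 0 \<le> b \<Longrightarrow> nat ((a + b) mod int p) mod p = (nat a + nat b) mod p"
  by (simp add: nat_mod_distrib nat_add_distrib)

lemma nonneg_mod: "p > 0 \<Longrightarrow> 0 \<le> (x::int) mod int p" by simp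

context msetup
begin

definition e0 :: nat where "e0 = (if i < p then kummer_index p \<xi> K \<sigma> \<gamma> else 0)"

definition Rv :: "(nat \<Rightarrow> int) \<Rightarrow> nat \<Rightarrow> nat" where "Rv m j = nat (m (i - 1 - j))"
definition nm :: "(nat \<Rightarrow> int) \<Rightarrow> 'a \<Rightarrow> 'a" where "nm m = nv (Rv m)"
definition Phi :: "(nat \<Rightarrow> int) \<times> nat \<Rightarrow> 'a \<Rightarrow> 'a" where "Phi x = nm (fst x) \<circ> ssig ^^ snd x"

abbreviation "nonneg m \<equiv> (\<forall>j. 0 \<le> m j)"

lemma nm_Gal: "nm m \<in> GL" unfolding nm_def by (rule nv(1))
lemma nm_K: "x \<in> K \<Longrightarrow> nm m x = x" unfolding nm_def by (rule nv(2))

lemma nonneg_A_add: "nonneg (A_add p m1 m2)" unfolding A_add_def using p0 by simp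
lemma nonneg_tau: "nonneg (tau_act p i m)" unfolding tau_act_def using p0 by simp
lemma nonneg_taup: "nonneg m \<Longrightarrow> nonneg ((tau_act p i ^^ k) m)"
  by (cases k) (simp_all add: nonneg_tau)
lemma nonneg_top: "nonneg (A_top p i e)" unfolding A_top_def using p0 by simp

lemma nm_add:
  assumes "nonneg m1" "nonneg m2"
  shows "nm (A_add p m1 m2) = nm m1 \<circ> nm m2"
  unfolding nm_def nv_comp
  by (rule nv_cong) (simp add: Rv_def A_add_def nat_mod_add assms)

lemma nm_zero: "nm (\<lambda>_. 0) = id"
  unfolding nm_def by (rule nv_zero) (simp add: Rv_def)

lemma ssig_nm:
  assumes m: "nonneg m"
  shows "ssig \<circ> nm m = nm (tau_act p i m) \<circ> ssig"
  unfolding nm_def ssig_nv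
proof -
  have "nv (T (Rv m)) = nv (Rv (tau_act p i m))"
  proof (rule nv_cong)
    fix j assume j: "j < i"
    show "T (Rv m) j mod p = Rv (tau_act p i m) j mod p"
    proof (cases "Suc j < i")
      case True
      then have "i - 1 - j \<noteq> 0" "i - 1 - j - 1 = i - 1 - Suc j" by auto
      then show ?thesis using j True m unfolding T_def Rv_def tau_act_def by (simp add: nat_mod_add)
    next
      case False
      then have "i - 1 - j = 0" using j by simp
      then show ?thesis using j False m unfolding T_def Rv_def tau_act_def by (simp add: nat_mod_distrib)
    qed
  qed
  then show "nv (T (Rv m)) \<circ> ssig = nv (Rv (tau_act p i m)) \<circ> ssig" by simp
qed

lemma ssigk_nm:
  "nonneg m \<Longrightarrow> ssig ^^ k \<circ> nm m = nm ((tau_act p i ^^ k) m) \<circ> ssig ^^ k"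
proof (induction k arbitrary: m)
  case 0 then show ?case by simp
next
  case (Suc k)
  have "ssig ^^ Suc k \<circ> nm m = ssig ^^ k \<circ> (ssig \<circ> nm m)" by (simp only: funpow_Suc_right comp_assoc)
  also have "\<dots> = (ssig ^^ k \<circ> nm (tau_act p i m)) \<circ> ssig" unfolding ssig_nm[OF Suc.prems] by (simp add: comp_assoc)
  also have "\<dots> = nm ((tau_act p i ^^ k) (tau_act p i m)) \<circ> (ssig ^^ k \<circ> ssig)"
    unfolding Suc.IH[OF nonneg_tau] by (simp add: comp_assoc)
  also have "\<dots> = nm ((tau_act p i ^^ Suc k) m) \<circ> ssig ^^ Suc k"
    by (simp add: funpow_Suc_right del: funpow.simps(2))
  finally show ?case .
qed

lemma Rv_top: "j < i \<Longrightarrow> Rv (A_top p i e) j = (if j = 0 then e mod p else 0)"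
  unfolding Rv_def A_top_def by (auto simp: nat_mod_distrib)

lemma ssig_p_top: "ssig ^^ p = nm (A_top p i e0)"
  unfolding ssig_p nm_def
proof (rule nv_cong)
  fix j assume j: "j < i"
  show "(p - 1) * w0 j mod p = Rv (A_top p i e0) j mod p"
  proof (cases "j = 0")
    case False
    then obtain j' where j': "j = Suc j'" by (cases j) auto
    have "w0 j mod p = 0" using w0_Suc j unfolding j' by simp
    then have "(p - 1) * w0 j mod p = 0" by (metis mod_mult_right_eq mult_0_right mod_0)
    then show ?thesis using Rv_top[OF j] False by simp
  next
    case True
    then have i0: "0 < i" using j by simp
    show ?thesis
    proof (cases "i < p")
      case True
      define e where "e = kummer_index p \<xi> K \<sigma> \<gamma>"
      have ep: "e < p" using kidx[OF True] unfolding e_def by simp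
      have "\<xi> ^ w0 0 = \<xi> ^ (e * (p - 1))" using w0_0_lt[OF i0 True] unfolding e_def .
      then have w: "w0 0 mod p = (e * (p - 1)) mod p" using xi_pow_eq_iff[OF pp xp x1] by blast
      have "(p - 1) * w0 0 mod p = (p - 1) * (e * (p - 1)) mod p"
        by (metis w mod_mult_right_eq)
      also have "(p - 1) * (e * (p - 1)) = e * ((p - 1) * (p - 1))" by (simp only: mult_ac)
      also have "\<dots> = e * (p * (p - 2)) + e" unfolding pm1_sq by (simp add: distrib_left)
      also have "(e * (p * (p - 2)) + e) mod p = e mod p" by (metis mod_mult_self4 mult.left_commute add.commute)
      finally show ?thesis using Rv_top[OF j] \<open>j = 0\<close> True ep unfolding e0_def e_def by simp
    next
      case False
      then have "i = p" using i_le_p by simp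
      then have "w0 0 mod p = 0" using w0_0_p by simp
      then have "(p - 1) * w0 0 mod p = 0" by (metis mod_mult_right_eq mult_0_right mod_0)
      then show ?thesis using Rv_top[OF j] \<open>j = 0\<close> False unfolding e0_def by simp
    qed
  qed
qed

abbreviation BB where "BB \<equiv> B_grp p i e0"

lemma carrier_BB: "carrier BB = Avec p i \<times> {..<p}" unfolding B_grp_def by simp

lemma mult_BB: "(m1, k1) \<otimes>\<^bsub>BB\<^esub> (m2, k2) =
   (A_add p (A_add p m1 ((tau_act p i ^^ k1) m2)) (if p \<le> k1 + k2 then A_top p i e0 else (\<lambda>_. 0)),
    (k1 + k2) mod p)"
  unfolding B_grp_def by simp

lemma Avec_nonneg: "m \<in> Avec p i \<Longrightarrow> nonneg m" unfolding Avec_def by simp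

lemma tau_zero: "j \<ge> i \<Longrightarrow> m \<in> Avec p i \<Longrightarrow> (tau_act p i ^^ k) m j = 0"
  by (cases k) (auto simp: tau_act_def Avec_def)

lemma BB_closed:
  assumes x: "x \<in> carrier BB" and y: "y \<in> carrier BB"
  shows "x \<otimes>\<^bsub>BB\<^esub> y \<in> carrier BB"
proof -
  obtain m1 k1 m2 k2 where xy: "x = (m1, k1)" "y = (m2, k2)" by (cases x, cases y) auto
  have m: "m1 \<in> Avec p i" "m2 \<in> Avec p i" using x y xy carrier_BB by auto
  show ?thesis unfolding xy mult_BB carrier_BB
  proof (intro SigmaI)
    show "(k1 + k2) mod p \<in> {..<p}" using p0 by simp
    show "A_add p (A_add p m1 ((tau_act p i ^^ k1) m2)) (if p \<le> k1 + k2 then A_top p i e0 else (\<lambda>_. 0)) \<in> Avec p i"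
      unfolding Avec_def
    proof (intro CollectI allI conjI impI)
      fix j
      show "0 \<le> A_add p (A_add p m1 ((tau_act p i ^^ k1) m2)) (if p \<le> k1 + k2 then A_top p i e0 else (\<lambda>_. 0)) j"
        unfolding A_add_def using p0 by simp
      show "A_add p (A_add p m1 ((tau_act p i ^^ k1) m2)) (if p \<le> k1 + k2 then A_top p i e0 else (\<lambda>_. 0)) j < int p"
        unfolding A_add_def using p0 by simp
      assume "i \<le> j"
      then show "A_add p (A_add p m1 ((tau_act p i ^^ k1) m2)) (if p \<le> k1 + k2 then A_top p i e0 else (\<lambda>_. 0)) j = 0"
        using m tau_zero[of j m2 k1] unfolding A_add_def A_top_def Avec_def by auto
    qed
  qed
qed

lemma Phi_Gal: "Phi x \<in> GL" unfolding Phi_def by (intro gal_comp nm_Gal ssigp_Gal)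

lemma Phi_K: "z \<in> K \<Longrightarrow> Phi x z = (\<sigma> ^^ snd x) z"
  unfolding Phi_def using ssigp_K nm_K sigp_K by simp

lemma Phi_mult:
  assumes x: "x \<in> carrier BB" and y: "y \<in> carrier BB"
  shows "Phi (x \<otimes>\<^bsub>BB\<^esub> y) = Phi x \<circ> Phi y"
proof -
  obtain m1 k1 m2 k2 where xy: "x = (m1, k1)" "y = (m2, k2)" by (cases x, cases y) auto
  have m: "m1 \<in> Avec p i" "m2 \<in> Avec p i" and k: "k1 < p" "k2 < p" using x y xy carrier_BB by auto
  have n1: "nonneg m1" "nonneg m2" using m Avec_nonneg by auto
  define X where "X = (if p \<le> k1 + k2 then A_top p i e0 else (\<lambda>_. 0))"
  have nX: "nonneg X" unfolding X_def using nonneg_top by simp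
  have split: "ssig ^^ (k1 + k2) = nm X \<circ> ssig ^^ ((k1 + k2) mod p)"
  proof (cases "p \<le> k1 + k2")
    case True
    then have e: "k1 + k2 = p + (k1 + k2) mod p" using k by (simp add: le_mod_geq)
    have "ssig ^^ (k1 + k2) = ssig ^^ p \<circ> ssig ^^ ((k1 + k2) mod p)"
      by (subst e) (simp add: funpow_add)
    then show ?thesis using True ssig_p_top unfolding X_def by simp
  next
    case False
    then show ?thesis unfolding X_def using nm_zero by simp
  qed
  have "Phi x \<circ> Phi y = nm m1 \<circ> (ssig ^^ k1 \<circ> nm m2) \<circ> ssig ^^ k2"
    unfolding Phi_def xy by (simp add: comp_assoc)
  also have "\<dots> = nm m1 \<circ> nm ((tau_act p i ^^ k1) m2) \<circ> ssig ^^ (k1 + k2)"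
    unfolding ssigk_nm[OF n1(2)] by (simp add: comp_assoc funpow_add)
  also have "\<dots> = nm m1 \<circ> nm ((tau_act p i ^^ k1) m2) \<circ> nm X \<circ> ssig ^^ ((k1 + k2) mod p)"
    unfolding split by (simp add: comp_assoc)
  also have "\<dots> = nm (A_add p (A_add p m1 ((tau_act p i ^^ k1) m2)) X) \<circ> ssig ^^ ((k1 + k2) mod p)"
    unfolding nm_add[OF nonneg_A_add nX] nm_add[OF n1(1) nonneg_taup[OF n1(2)]] by (simp add: comp_assoc)
  also have "\<dots> = Phi (x \<otimes>\<^bsub>BB\<^esub> y)" unfolding Phi_def xy mult_BB X_def by simp
  finally show ?thesis by simp
qed

lemma Phi_inj: "inj_on Phi (carrier BB)"
proof (rule inj_onI)
  fix x y assume x: "x \<in> carrier BB" and y: "y \<in> carrier BB" and e: "Phi x = Phi y"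
  obtain m k m' k' where xy: "x = (m, k)" "y = (m', k')" by (cases x, cases y) auto
  have m: "m \<in> Avec p i" "m' \<in> Avec p i" and k: "k < p" "k' < p" using x y xy carrier_BB by auto
  have "Phi x \<alpha> = \<xi> ^ k * \<alpha>" "Phi y \<alpha> = \<xi> ^ k' * \<alpha>"
    using Phi_K[OF alphaK] sigp_alpha xy by auto
  then have "\<xi> ^ k = \<xi> ^ k'" using e alpha0 by (metis mult_cancel_right)
  then have kk: "k = k'" using xi_pow_inj[OF pp xp x1 k] by simp
  have "nm m \<circ> ssig ^^ k = nm m' \<circ> ssig ^^ k" using e unfolding Phi_def xy kk by simp
  then have "nm m = nm m'" by (rule gal_cancel_right[OF ssigp_Gal])
  then have R: "Rv m j mod p = Rv m' j mod p" if "j < i" for j using nv_eq_D that unfolding nm_def by blast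
  have "m = m'"
  proof
    fix l show "m l = m' l"
    proof (cases "l < i")
      case True
      have "Rv m (i - 1 - l) mod p = Rv m' (i - 1 - l) mod p" using R True by simp
      moreover have "i - 1 - (i - 1 - l) = l" using True by simp
      ultimately have "nat (m l) mod p = nat (m' l) mod p" unfolding Rv_def by simp
      moreover have "0 \<le> m l" "m l < int p" "0 \<le> m' l" "m' l < int p" using m unfolding Avec_def by auto
      ultimately show ?thesis by (simp add: nat_less_iff)
    next
      case False then show ?thesis using m unfolding Avec_def by simp
    qed
  qed
  then show "x = y" using xy kk by simp
qed

lemma Phi_surj: "g \<in> GL \<Longrightarrow> \<exists>x\<in>carrier BB. Phi x = g"
proof -
  assume g: "g \<in> GL"
  obtain k where k: "k < p" "\<And>x. x \<in> K \<Longrightarrow> g x = (\<sigma> ^^ k) x" using gal_restrict[OF g] by blast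
  define h where "h = g \<circ> ssig ^^ ((p - 1) * k)"
  have hG: "h \<in> GL" unfolding h_def by (intro gal_comp g ssigp_Gal)
  have hK: "h x = x" if "x \<in> K" for x
  proof -
    have "h x = (\<sigma> ^^ k) ((\<sigma> ^^ ((p - 1) * k)) x)" unfolding h_def using ssigp_K that k(2) sigp_K by simp
    also have "\<dots> = (\<sigma> ^^ (p * k)) x" unfolding funpow_apply_add using p0 by (cases p) (auto simp: algebra_simps)
    also have "\<dots> = x" using sig_pq that by simp
    finally show ?thesis .
  qed
  obtain v where hv: "h = nv v" using kernel_nv[OF hG hK] by blast
  define Rt where "Rt = Rv (A_top p i e0)"
  define u where "u = (\<lambda>j. (p - 1) * k * Rt j)"
  have "ssig ^^ (p * k) = (ssig ^^ p) ^^ k" by (simp add: funpow_mult)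
  then have sp: "ssig ^^ (p * k) = nv (\<lambda>j. k * Rt j)"
    using ssig_p_top nv_pow unfolding nm_def Rt_def by simp
  have "h \<circ> ssig ^^ k = g \<circ> ssig ^^ (p * k)"
  proof -
    have "(p - 1) * k + k = p * k" using p0 by (cases p) auto
    then show ?thesis unfolding h_def by (simp add: comp_assoc funpow_add[symmetric])
  qed
  then have e1: "nv v \<circ> ssig ^^ k = g \<circ> nv (\<lambda>j. k * Rt j)" unfolding hv sp .
  have inv: "nv (\<lambda>j. k * Rt j) \<circ> nv u = id"
    unfolding nv_comp u_def
  proof (rule nv_zero)
    fix j
    have "k * Rt j + (p - 1) * k * Rt j = p * (k * Rt j)" using p0 by (cases p) (auto simp: algebra_simps)
    then show "(k * Rt j + (p - 1) * k * Rt j) mod p = 0" by simp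
  qed
  have Tu: "T u = u"
  proof
    fix j
    have "Suc j < i \<Longrightarrow> Rt (Suc j) = 0" unfolding Rt_def using Rv_top by simp
    then show "T u j = u j" unfolding T_def u_def by auto
  qed
  have ssu: "ssig ^^ n \<circ> nv u = nv u \<circ> ssig ^^ n" for n
  proof (induction n)
    case 0 then show ?case by simp
  next
    case (Suc n)
    have "ssig ^^ Suc n \<circ> nv u = ssig ^^ n \<circ> (ssig \<circ> nv u)" by (simp only: funpow_Suc_right comp_assoc)
    also have "\<dots> = ssig ^^ n \<circ> (nv u \<circ> ssig)" unfolding ssig_nv Tu ..
    also have "\<dots> = (ssig ^^ n \<circ> nv u) \<circ> ssig" by (simp only: comp_assoc)
    also have "\<dots> = (nv u \<circ> ssig ^^ n) \<circ> ssig" unfolding Suc ..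
    also have "\<dots> = nv u \<circ> ssig ^^ Suc n" by (simp only: comp_assoc funpow_Suc_right)
    finally show ?case .
  qed
  have "g = g \<circ> (nv (\<lambda>j. k * Rt j) \<circ> nv u)" unfolding inv by simp
  also have "\<dots> = nv v \<circ> (ssig ^^ k \<circ> nv u)" unfolding comp_assoc[symmetric] e1[symmetric] by (simp add: comp_assoc)
  also have "\<dots> = nv (\<lambda>j. v j + u j) \<circ> ssig ^^ k" unfolding ssu nv_comp[symmetric] by (simp add: comp_assoc)
  finally have gdec: "g = nv (\<lambda>j. v j + u j) \<circ> ssig ^^ k" .
  define m where "m = (\<lambda>l. if l < i then int ((v (i - 1 - l) + u (i - 1 - l)) mod p) else 0)"
  have mA: "m \<in> Avec p i" unfolding Avec_def m_def using p0 by auto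
  have "nm m = nv (\<lambda>j. v j + u j)"
    unfolding nm_def
  proof (rule nv_cong)
    fix j assume j: "j < i"
    then have "i - 1 - j < i" "i - 1 - (i - 1 - j) = j" by auto
    then show "Rv m j mod p = (v j + u j) mod p" unfolding Rv_def m_def by simp
  qed
  then have "Phi (m, k) = g" unfolding Phi_def gdec by simp
  moreover have "(m, k) \<in> carrier BB" using mA k(1) carrier_BB by simp
  ultimately show ?thesis by blast
qed

lemma iso_ext: "iso_as_extension L K F \<sigma> BB"
proof -
  have "Phi ` carrier BB = GL"
  proof
    show "Phi ` carrier BB \<subseteq> GL" using Phi_Gal by auto
    show "GL \<subseteq> Phi ` carrier BB" using Phi_surj by (metis image_eqI subsetI)
  qed
  then have bij: "bij_betw Phi (carrier BB) GL"
    unfolding bij_betw_def using Phi_inj by auto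
  define \<phi> where "\<phi> = the_inv_into (carrier BB) Phi"
  have bij\<phi>: "bij_betw \<phi> GL (carrier BB)" unfolding \<phi>_def by (rule bij_betw_the_inv_into[OF bij])
  have \<phi>in: "\<phi> g \<in> carrier BB" if "g \<in> GL" for g using bij_betwE[OF bij\<phi>] that by blast
  have Phi\<phi>: "Phi (\<phi> g) = g" if "g \<in> GL" for g
    unfolding \<phi>_def using f_the_inv_into_f_bij_betw[OF bij that] .
  have \<phi>Phi: "\<phi> (Phi x) = x" if "x \<in> carrier BB" for x
    unfolding \<phi>_def using the_inv_into_f_f[OF Phi_inj that] .
  have hom: "\<phi> \<in> hom (Gal_group L F) BB"
    unfolding hom_def
  proof (intro CollectI conjI ballI)
    show "\<phi> \<in> carrier (Gal_group L F) \<rightarrow> carrier BB" unfolding Gal_group_def using \<phi>in by auto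
    fix g1 g2 assume g: "g1 \<in> carrier (Gal_group L F)" "g2 \<in> carrier (Gal_group L F)"
    then have g': "g1 \<in> GL" "g2 \<in> GL" unfolding Gal_group_def by auto
    have "Phi (\<phi> g1 \<otimes>\<^bsub>BB\<^esub> \<phi> g2) = g1 \<circ> g2" using Phi_mult[OF \<phi>in \<phi>in] g' Phi\<phi> by simp
    then have "\<phi> (g1 \<circ> g2) = \<phi> g1 \<otimes>\<^bsub>BB\<^esub> \<phi> g2" using \<phi>Phi[OF BB_closed[OF \<phi>in \<phi>in]] g' by metis
    then show "\<phi> (g1 \<otimes>\<^bsub>Gal_group L F\<^esub> g2) = \<phi> g1 \<otimes>\<^bsub>BB\<^esub> \<phi> g2" unfolding Gal_group_def by simp
  qed
  have "\<phi> \<in> iso (Gal_group L F) BB"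
    unfolding iso_def using hom bij\<phi> unfolding Gal_group_def by simp
  moreover have "\<forall>g\<in>GL. \<forall>x\<in>K. g x = (\<sigma> ^^ snd (\<phi> g)) x"
    using Phi_K Phi\<phi> by metis
  ultimately show ?thesis unfolding iso_as_extension_def by blast
qed

end


theorem lemma3:
  fixes p :: nat and F K :: "'a::field set" and \<xi> a \<alpha> \<gamma> :: 'a and \<sigma> :: "'a \<Rightarrow> 'a"
  assumes p_prime: "prime p" and p_odd: "odd p"
    and F_field: "is_subfield F"
    and xi: "\<xi> \<in> F" "\<xi> ^ p = 1" "\<xi> \<noteq> 1"
    and a: "a \<in> F" "a \<noteq> 0" "\<alpha> ^ p = a" "\<not> (\<exists>x\<in>F. x ^ p = a)"
    and K_def: "K = field_gen (F \<union> {\<alpha>})"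
    and sigma: "is_aut_over K F \<sigma>" "\<sigma> \<alpha> = \<xi> * \<alpha>"
    and roots: "\<forall>x\<in>K. \<exists>y. y ^ p = x"
    and gamma: "\<gamma> \<in> K" "\<gamma> \<noteq> 0"
  shows "(mod_length p K \<sigma> \<gamma> < p \<longrightarrow>
            in_J p K \<sigma> (p - 1) \<gamma> \<and>
            iso_as_extension (L_M p K \<sigma> \<gamma>) K F \<sigma>
              (B_grp p (mod_length p K \<sigma> \<gamma>) (kummer_index p \<xi> K \<sigma> \<gamma>)))
       \<and> (mod_length p K \<sigma> \<gamma> = p \<longrightarrow>
            iso_as_extension (L_M p K \<sigma> \<gamma>) K F \<sigma> (B_grp p p 0))"
proof -
  interpret M: msetup p F K \<xi> a \<alpha> \<gamma> \<sigma>
    using p_prime p_odd F_field xi a K_def sigma roots gamma by unfold_locales auto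
  have ml: "mod_length p K \<sigma> \<gamma> = M.i" by (simp add: M.i_def)
  have LM: "L_M p K \<sigma> \<gamma> = M.L" by (rule M.LM_eq)
  show ?thesis
  proof (intro conjI impI)
    assume "mod_length p K \<sigma> \<gamma> < p"
    then have ip: "M.i < p" using ml by simp
    show "in_J p K \<sigma> (p - 1) \<gamma>" by (rule M.inJ[OF ip])
    show "iso_as_extension (L_M p K \<sigma> \<gamma>) K F \<sigma> (B_grp p (mod_length p K \<sigma> \<gamma>) (kummer_index p \<xi> K \<sigma> \<gamma>))"
      using M.iso_ext ip unfolding LM ml M.e0_def by simp
  next
    assume "mod_length p K \<sigma> \<gamma> = p"
    then have ip: "M.i = p" using ml by simp
    show "iso_as_extension (L_M p K \<sigma> \<gamma>) K F \<sigma> (B_grp p p 0)"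
      using M.iso_ext ip unfolding LM M.e0_def by simp
  qed
qed


end
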